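(* For $J,J'\subseteq[n-1]$, we have $X_J\cap\Omega_{J'}\neq\emptyset$ if and only if $J\supseteq J'$. Moreover, $X_J\cap\Omega_J=\{w_J\}$ (the permutation flag of $w_J$).
   Context: Let $n\ge2$, $[n-1]=\{1,\dots,n-1\}$. $Fl_n$ is the variety of full flags $V_\bullet=(V_1\subset\cdots\subset V_n=\mathbb C^n)$, $\dim V_i=i$, identified with $GL_n(\mathbb C)/B$ ($B$ = upper triangular matrices). A permutation $w\in\mathfrak S_n$ is identified with the flag $V_i=\langle e_{w(1)},\dots,e_{w(i)}\rangle$. $X_w=\overline{BwB/B}$ is the Schubert variety and $\Omega_w=\overline{B^-wB/B}$ the dual Schubert variety ($B^-$ = lower triangular matrices). $N$ is the $n\times n$ nilpotent Jordan block ($Ne_1=0$, $Ne_i=e_{i-1}$ for $i\ge2$). The Peterson variety is $\mathrm{Pet}_n=\{V_\bullet\in Fl_n: NV_i\subseteq V_{i+1},\ 1\le i\le n-1\}$. For $J\subseteq[n-1]$, $w_J$ is the longest element of the subgroup of $\mathfrak S_n$ generated by the simple transpositions $s_i$, $i\in J$ (equivalently the product of the longest elements of the subgroups attached to the maximal intervals of consecutive integers of $J$). Set $X_J=X_{w_J}\cap\mathrm{Pet}_n$ and $\Omega_J=\Omega_{w_J}\cap\mathrm{Pet}_n$. *)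

theory Defs
  imports "HOL-Analysis.Analysis"
begin

text \<open>Conventions: n x n complex matrices are functions nat => nat => complex,
  vanishing outside {0..<n} x {0..<n}; the standard basis vector e_(k+1) of the
  paper is index k here (0-indexed). Matrices carry the product topology
  (= the usual topology on C^(n x n), since entries outside the range are 0).\<close>

type_synonym cmat = "nat \<Rightarrow> nat \<Rightarrow> complex"
type_synonym cvec = "nat \<Rightarrow> complex"

definition matrices :: "nat \<Rightarrow> cmat set" where
  "matrices n = {A. \<forall>i j. \<not> (i < n \<and> j < n) \<longrightarrow> A i j = 0}"

definition mmul :: "nat \<Rightarrow> cmat \<Rightarrow> cmat \<Rightarrow> cmat" where
  "mmul n A C = (\<lambda>i j. if i < n \<and> j < n then (\<Sum>k<n. A i k * C k j) else 0)"

definition idm :: "nat \<Rightarrow> cmat" where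
  "idm n = (\<lambda>i j. if i < n \<and> j < n \<and> i = j then 1 else 0)"

definition GL :: "nat \<Rightarrow> cmat set" where
  "GL n = {A \<in> matrices n. \<exists>C \<in> matrices n. mmul n A C = idm n \<and> mmul n C A = idm n}"

definition Bup :: "nat \<Rightarrow> cmat set" where
  "Bup n = {A \<in> GL n. \<forall>i j. j < i \<longrightarrow> A i j = 0}"

definition Blow :: "nat \<Rightarrow> cmat set" where
  "Blow n = {A \<in> GL n. \<forall>i j. i < j \<longrightarrow> A i j = 0}"

definition permmat :: "nat \<Rightarrow> (nat \<Rightarrow> nat) \<Rightarrow> cmat" where
  "permmat n w = (\<lambda>i j. if i < n \<and> j < n \<and> i = w j then 1 else 0)"

definition dcoset :: "nat \<Rightarrow> cmat set \<Rightarrow> (nat \<Rightarrow> nat) \<Rightarrow> cmat set" where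
  "dcoset n H w = {mmul n (mmul n b (permmat n w)) b' | b b'. b \<in> H \<and> b' \<in> Bup n}"

definition colspan :: "nat \<Rightarrow> cmat \<Rightarrow> nat \<Rightarrow> cvec set" where
  "colspan n g k = {v. \<exists>c :: nat \<Rightarrow> complex. v = (\<lambda>i. \<Sum>j<k. c j * g i j)}"

definition flag_of :: "nat \<Rightarrow> cmat \<Rightarrow> nat \<Rightarrow> cvec set" where
  "flag_of n g = (\<lambda>k. if k \<le> n then colspan n g k else {})"

definition Fl :: "nat \<Rightarrow> (nat \<Rightarrow> cvec set) set" where
  "Fl n = flag_of n ` GL n"

definition flag_top :: "nat \<Rightarrow> (nat \<Rightarrow> cvec set) topology" where
  "flag_top n = topology (\<lambda>U. U \<subseteq> Fl n \<and>
      openin (top_of_set (GL n)) {g \<in> GL n. flag_of n g \<in> U})"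

definition perm_flag :: "nat \<Rightarrow> (nat \<Rightarrow> nat) \<Rightarrow> nat \<Rightarrow> cvec set" where
  "perm_flag n w = flag_of n (permmat n w)"

definition Schubert :: "nat \<Rightarrow> (nat \<Rightarrow> nat) \<Rightarrow> (nat \<Rightarrow> cvec set) set" where
  "Schubert n w = flag_top n closure_of (flag_of n ` dcoset n (Bup n) w)"

definition dualSchubert :: "nat \<Rightarrow> (nat \<Rightarrow> nat) \<Rightarrow> (nat \<Rightarrow> cvec set) set" where
  "dualSchubert n w = flag_top n closure_of (flag_of n ` dcoset n (Blow n) w)"

text \<open>Nilpotent Jordan block: N e_1 = 0, N e_i = e_(i-1); 0-indexed (N v)_i = v_(i+1).\<close>
definition Nop :: "nat \<Rightarrow> cvec \<Rightarrow> cvec" where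
  "Nop n v = (\<lambda>i. if i + 1 < n then v (i + 1) else 0)"

definition Pet :: "nat \<Rightarrow> (nat \<Rightarrow> cvec set) set" where
  "Pet n = {F \<in> Fl n. \<forall>i \<in> {1..n-1}. Nop n ` F i \<subseteq> F (Suc i)}"

text \<open>w_J for J a subset of {1..n-1}: product of the longest elements of the
  parabolic subgroups of the maximal intervals of J, i.e. it reverses each
  maximal block of positions a..b (0-indexed) with s_(a+1),...,s_b in J
  (s_i swaps the 0-indexed positions i-1 and i).\<close>
definition wJ :: "nat \<Rightarrow> nat set \<Rightarrow> nat \<Rightarrow> nat" where
  "wJ n J k = (if k < n then
      (LEAST a. a \<le> k \<and> {a<..k} \<subseteq> J) + (GREATEST b. k \<le> b \<and> b < n \<and> {k<..b} \<subseteq> J) - k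
    else k)"

definition XJ :: "nat \<Rightarrow> nat set \<Rightarrow> (nat \<Rightarrow> cvec set) set" where
  "XJ n J = Schubert n (wJ n J) \<inter> Pet n"

definition OmegaJ :: "nat \<Rightarrow> nat set \<Rightarrow> (nat \<Rightarrow> cvec set) set" where
  "OmegaJ n J = dualSchubert n (wJ n J) \<inter> Pet n"

end

theory Submission
  imports Defs "Jordan_Normal_Form.Determinant" "HOL-Combinatorics.Permutations"
begin

definition mcol :: "cmat \<Rightarrow> nat \<Rightarrow> cvec" where "mcol g j = (\<lambda>i. g i j)"

lemma mmul_assoc: "mmul n (mmul n A B) C = mmul n A (mmul n B C)"
proof (rule ext, rule ext)
  fix i j
  show "mmul n (mmul n A B) C i j = mmul n A (mmul n B C) i j"
  proof (cases "i < n \<and> j < n")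
    case True
    have "(\<Sum>l<n. (\<Sum>k<n. A i k * B k l) * C l j) = (\<Sum>l<n. \<Sum>k<n. A i k * B k l * C l j)"
      by (simp add: sum_distrib_right)
    also have "\<dots> = (\<Sum>k<n. \<Sum>l<n. A i k * B k l * C l j)" by (rule sum.swap)
    also have "\<dots> = (\<Sum>k<n. A i k * (\<Sum>l<n. B k l * C l j))"
      by (simp add: sum_distrib_left mult.assoc)
    moreover have "mmul n (mmul n A B) C i j = (\<Sum>l<n. (\<Sum>k<n. A i k * B k l) * C l j)"
      using True by (auto simp: mmul_def intro!: sum.cong)
    moreover have "mmul n A (mmul n B C) i j = (\<Sum>k<n. A i k * (\<Sum>l<n. B k l * C l j))"
      using True by (auto simp: mmul_def intro!: sum.cong)
    ultimately show ?thesis by simp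
  qed (auto simp: mmul_def)
qed

lemma mmul_matrices[simp]: "mmul n A B \<in> matrices n"
  by (simp add: mmul_def matrices_def)

lemma idm_matrices[simp]: "idm n \<in> matrices n"
  by (simp add: idm_def matrices_def)

lemma mmul_idm_left: "A \<in> matrices n \<Longrightarrow> mmul n (idm n) A = A"
proof (rule ext, rule ext)
  fix i j assume A: "A \<in> matrices n"
  show "mmul n (idm n) A i j = A i j"
  proof (cases "i < n \<and> j < n")
    case True
    have "(\<Sum>k<n. idm n i k * A k j) = (\<Sum>k<n. if k = i then A k j else 0)"
      using True by (intro sum.cong) (auto simp: idm_def)
    also have "\<dots> = A i j" using True by simp
    finally show ?thesis using True by (simp add: mmul_def)
  qed (use A in \<open>auto simp: mmul_def matrices_def\<close>)
qed

lemma mmul_idm_right: "A \<in> matrices n \<Longrightarrow> mmul n A (idm n) = A"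
proof (rule ext, rule ext)
  fix i j assume A: "A \<in> matrices n"
  show "mmul n A (idm n) i j = A i j"
  proof (cases "i < n \<and> j < n")
    case True
    have "(\<Sum>k<n. A i k * idm n k j) = (\<Sum>k<n. if k = j then A i k else 0)"
      using True by (intro sum.cong) (auto simp: idm_def)
    also have "\<dots> = A i j" using True by simp
    finally show ?thesis using True by (simp add: mmul_def)
  qed (use A in \<open>auto simp: mmul_def matrices_def\<close>)
qed

lemma idm_GL[simp]: "idm n \<in> GL n"
  unfolding GL_def by (auto intro!: bexI[of _ "idm n"] simp: mmul_idm_left)

lemma GL_mult: assumes "A \<in> GL n" "B \<in> GL n" shows "mmul n A B \<in> GL n"
proof -
  obtain A' where A': "A' \<in> matrices n" "mmul n A A' = idm n" "mmul n A' A = idm n"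
    using assms(1) by (auto simp: GL_def)
  obtain B' where B': "B' \<in> matrices n" "mmul n B B' = idm n" "mmul n B' B = idm n"
    using assms(2) by (auto simp: GL_def)
  have "B \<in> matrices n" "A \<in> matrices n" using assms by (auto simp: GL_def)
  have "mmul n (mmul n A B) (mmul n B' A') = idm n"
    by (simp add: mmul_assoc[symmetric]) (simp add: mmul_assoc B' \<open>A \<in> matrices n\<close> mmul_idm_right A')
  moreover have "mmul n (mmul n B' A') (mmul n A B) = idm n"
    by (simp add: mmul_assoc[symmetric]) (simp add: mmul_assoc A' \<open>B \<in> matrices n\<close> mmul_idm_right B')
  ultimately show ?thesis unfolding GL_def by (auto intro!: bexI[of _ "mmul n B' A'"])
qed

lemma Bup_mult: assumes "A \<in> Bup n" "B \<in> Bup n" shows "mmul n A B \<in> Bup n"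
proof -
  have "mmul n A B i j = 0" if "j < i" for i j
  proof -
    have "A i k * B k j = 0" for k
      using assms that by (cases "k < i") (auto simp: Bup_def)
    then show ?thesis unfolding mmul_def by (simp only:) simp
  qed
  then show ?thesis using assms by (auto simp: Bup_def intro: GL_mult)
qed

lemma Blow_mult: assumes "A \<in> Blow n" "B \<in> Blow n" shows "mmul n A B \<in> Blow n"
proof -
  have "mmul n A B i j = 0" if "i < j" for i j
  proof -
    have "A i k * B k j = 0" for k
      using assms that by (cases "i < k") (auto simp: Blow_def)
    then show ?thesis unfolding mmul_def by (simp only:) simp
  qed
  then show ?thesis using assms by (auto simp: Blow_def intro: GL_mult)
qed

lemma idm_Bup[simp]: "idm n \<in> Bup n" and idm_Blow[simp]: "idm n \<in> Blow n"
  by (auto simp: Bup_def Blow_def) (auto simp: idm_def)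

lemma colspan_iff: "v \<in> colspan n g k \<longleftrightarrow> (\<exists>c. v = (\<lambda>i. \<Sum>j<k. c j * g i j))"
  by (simp add: colspan_def)

lemma colspan_sum:
  assumes "finite A" "\<And>a. a \<in> A \<Longrightarrow> x a \<in> colspan n g k"
  shows "(\<lambda>i. \<Sum>a\<in>A. d a * x a i) \<in> colspan n g k"
proof -
  have "\<forall>a\<in>A. \<exists>c. x a = (\<lambda>i. \<Sum>j<k. c j * g i j)" using assms(2) by (auto simp: colspan_def)
  then obtain c where c: "\<And>a. a \<in> A \<Longrightarrow> x a = (\<lambda>i. \<Sum>j<k. c a j * g i j)" by metis
  have "(\<lambda>i. \<Sum>a\<in>A. d a * x a i) = (\<lambda>i. \<Sum>j<k. (\<Sum>a\<in>A. d a * c a j) * g i j)"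
  proof
    fix i
    have "(\<Sum>a\<in>A. d a * x a i) = (\<Sum>a\<in>A. \<Sum>j<k. d a * c a j * g i j)"
      using c by (simp add: sum_distrib_left mult.assoc)
    also have "\<dots> = (\<Sum>j<k. \<Sum>a\<in>A. d a * c a j * g i j)" by (rule sum.swap)
    also have "\<dots> = (\<Sum>j<k. (\<Sum>a\<in>A. d a * c a j) * g i j)" by (simp add: sum_distrib_right)
    finally show "(\<Sum>a\<in>A. d a * x a i) = (\<Sum>j<k. (\<Sum>a\<in>A. d a * c a j) * g i j)" .
  qed
  then show ?thesis by (auto simp: colspan_def)
qed

lemma colspan_smult: "v \<in> colspan n g k \<Longrightarrow> (\<lambda>i. a * v i) \<in> colspan n g k"
  using colspan_sum[of "{0::nat}" "\<lambda>_. v" n g k "\<lambda>_. a"] by simp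

lemma col_in_colspan: "j < k \<Longrightarrow> mcol g j \<in> colspan n g k"
proof -
  assume "j < k"
  have "(\<Sum>l<k. (if l = j then 1 else 0) * g i l) = (\<Sum>l<k. if l = j then g i l else 0)" for i
    by (rule sum.cong) auto
  then have "mcol g j = (\<lambda>i. \<Sum>l<k. (if l = j then 1 else 0) * g i l)"
    using \<open>j < k\<close> by (simp add: mcol_def)
  then show ?thesis by (auto simp: colspan_def)
qed

lemma colspan_subset:
  assumes "\<And>j. j < k \<Longrightarrow> mcol h j \<in> colspan n g k'"
  shows "colspan n h k \<subseteq> colspan n g k'"
proof
  fix v assume "v \<in> colspan n h k"
  then obtain c where c: "v = (\<lambda>i. \<Sum>j<k. c j * h i j)" by (auto simp: colspan_def)
  have "(\<lambda>i. \<Sum>j\<in>{..<k}. c j * mcol h j i) \<in> colspan n g k'"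
    by (rule colspan_sum) (use assms in auto)
  then show "v \<in> colspan n g k'" using c by (simp add: mcol_def)
qed

lemma colspan_mono: "k \<le> k' \<Longrightarrow> colspan n g k \<subseteq> colspan n g k'"
  by (rule colspan_subset) (auto intro: col_in_colspan)

lemma colspan_outside: "g \<in> matrices n \<Longrightarrow> v \<in> colspan n g k \<Longrightarrow> n \<le> i \<Longrightarrow> v i = 0"
  by (auto simp: colspan_def matrices_def)

lemma left_right_inv_fun:
  fixes D C :: "nat \<Rightarrow> nat \<Rightarrow> complex"
  assumes "\<And>i j. i < k \<Longrightarrow> j < k \<Longrightarrow> (\<Sum>l<k. D i l * C l j) = (if i = j then 1 else 0)"
  shows "\<And>i j. i < k \<Longrightarrow> j < k \<Longrightarrow> (\<Sum>l<k. C i l * D l j) = (if i = j then 1 else 0)"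
proof -
  fix i j assume ij: "i < k" "j < k"
  let ?A = "mat k k (\<lambda>(i,j). D i j)" and ?B = "mat k k (\<lambda>(i,j). C i j)"
  have AB: "?A * ?B = 1\<^sub>m k"
    by (rule eq_matI) (auto simp: scalar_prod_def assms atLeast0LessThan)
  have "?B * ?A = 1\<^sub>m k"
    by (rule mat_mult_left_right_inverse[OF _ _ AB]) auto
  then have "(?B * ?A) $$ (i,j) = (1\<^sub>m k :: complex mat) $$ (i,j)" by simp
  then show "(\<Sum>l<k. C i l * D l j) = (if i = j then 1 else 0)"
    using ij by (simp add: scalar_prod_def atLeast0LessThan)
qed

lemma colspan_GL_eq:
  assumes g: "g \<in> GL n" and h: "h \<in> GL n" and k: "k \<le> n"
    and sub: "colspan n g k \<subseteq> colspan n h k"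
  shows "colspan n h k \<subseteq> colspan n g k"
proof -
  obtain gi where gi: "mmul n gi g = idm n" using g by (auto simp: GL_def)
  have "\<exists>c. j < k \<longrightarrow> mcol g j = (\<lambda>i. \<Sum>l<k. c l * h i l)" for j
  proof (cases "j < k")
    case True
    then have "mcol g j \<in> colspan n h k" using sub col_in_colspan[OF True] by blast
    then show ?thesis by (auto simp: colspan_def)
  qed simp
  then have "\<forall>j. \<exists>c. j < k \<longrightarrow> mcol g j = (\<lambda>i. \<Sum>l<k. c l * h i l)" by blast
  then obtain C where C0: "\<forall>j. j < k \<longrightarrow> mcol g j = (\<lambda>i. \<Sum>l<k. C j l * h i l)"
    by (rule choice[THEN exE])
  then have C: "\<And>j. j < k \<Longrightarrow> mcol g j = (\<lambda>i. \<Sum>l<k. C j l * h i l)" by blast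
  define D where "D i l = mmul n gi h i l" for i l
  have gC: "g m j = (\<Sum>l<k. C j l * h m l)" if "j < k" for m j
    using C[OF that] by (simp add: mcol_def fun_eq_iff)
  have 1: "(\<Sum>l<k. D i l * C j l) = (if i = j then 1 else 0)" if "i < k" "j < k" for i j
  proof -
    have "(if i = j then 1 else 0) = mmul n gi g i j" using gi that k by (simp add: idm_def)
    also have "\<dots> = (\<Sum>m<n. gi i m * g m j)" using that k by (simp add: mmul_def)
    also have "\<dots> = (\<Sum>m<n. \<Sum>l<k. gi i m * h m l * C j l)"
      using that by (simp add: gC sum_distrib_left) (simp add: ac_simps)
    also have "\<dots> = (\<Sum>l<k. \<Sum>m<n. gi i m * h m l * C j l)" by (rule sum.swap)
    also have "\<dots> = (\<Sum>l<k. D i l * C j l)"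
      using that k by (auto simp: D_def mmul_def sum_distrib_right intro!: sum.cong)
    finally show ?thesis by simp
  qed
  have 2: "(\<Sum>l<k. C l i * D l j) = (if i = j then 1 else 0)" if "i < k" "j < k" for i j
    using left_right_inv_fun[of k D "\<lambda>l j. C j l", OF 1 that] by simp
  show ?thesis
  proof (rule colspan_subset)
    fix l' assume l': "l' < k"
    have "mcol h l' = (\<lambda>i. \<Sum>j<k. D j l' * g i j)"
    proof
      fix i
      have "(\<Sum>j<k. D j l' * g i j) = (\<Sum>j<k. \<Sum>l<k. C j l * D j l' * h i l)"
        by (simp add: gC sum_distrib_left ac_simps)
      also have "\<dots> = (\<Sum>l<k. \<Sum>j<k. C j l * D j l' * h i l)" by (rule sum.swap)
      also have "\<dots> = (\<Sum>l<k. (\<Sum>j<k. C j l * D j l') * h i l)" by (simp add: sum_distrib_right)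
      also have "\<dots> = (\<Sum>l<k. (if l = l' then h i l else 0))"
        using 2 l' by (intro sum.cong) auto
      also have "\<dots> = h i l'" using l' by simp
      finally show "mcol h l' i = (\<Sum>j<k. D j l' * g i j)" by (simp add: mcol_def)
    qed
    then show "mcol h l' \<in> colspan n g k" by (auto simp: colspan_def)
  qed
qed

definition lo :: "nat set \<Rightarrow> nat \<Rightarrow> nat" where
  "lo J k = (LEAST a. a \<le> k \<and> {a<..k} \<subseteq> J)"
definition hi :: "nat \<Rightarrow> nat set \<Rightarrow> nat \<Rightarrow> nat" where
  "hi n J k = (GREATEST b. k \<le> b \<and> b < n \<and> {k<..b} \<subseteq> J)"

lemma wJ_lohi: "k < n \<Longrightarrow> wJ n J k = lo J k + hi n J k - k"
  by (simp add: wJ_def lo_def hi_def)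
lemma wJ_out: "\<not> k < n \<Longrightarrow> wJ n J k = k"
  by (simp add: wJ_def)

lemma ioc_union: "{a<..k} \<subseteq> J \<Longrightarrow> {k<..b} \<subseteq> J \<Longrightarrow> {a<..b} \<subseteq> (J::nat set)"
proof
  fix x assume "{a<..k} \<subseteq> J" "{k<..b} \<subseteq> J" "x \<in> {a<..b}"
  then show "x \<in> J" by (cases "x \<le> k") auto
qed

lemma ioc_Suc: "{x<..Suc x} = {Suc x}"
  by (auto simp: set_eq_iff)

lemma lo_props: "lo J k \<le> k" "{lo J k<..k} \<subseteq> J"
  "a \<le> k \<Longrightarrow> {a<..k} \<subseteq> J \<Longrightarrow> lo J k \<le> a"
proof -
  have ex: "k \<le> k \<and> {k<..k} \<subseteq> J" by simp
  show "lo J k \<le> k" "{lo J k<..k} \<subseteq> J"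
    using LeastI[of "\<lambda>a. a \<le> k \<and> {a<..k} \<subseteq> J", OF ex] by (auto simp: lo_def)
  show "a \<le> k \<Longrightarrow> {a<..k} \<subseteq> J \<Longrightarrow> lo J k \<le> a"
    unfolding lo_def by (rule Least_le) simp
qed

lemma hi_props: assumes "k < n"
  shows "k \<le> hi n J k" "hi n J k < n" "{k<..hi n J k} \<subseteq> J"
    "k \<le> b \<Longrightarrow> b < n \<Longrightarrow> {k<..b} \<subseteq> J \<Longrightarrow> b \<le> hi n J k"
proof -
  have ex: "k \<le> k \<and> k < n \<and> {k<..k} \<subseteq> J" using assms by simp
  have bd: "\<forall>y. y \<ge> k \<and> y < n \<and> {k<..y} \<subseteq> J \<longrightarrow> y \<le> n" by auto
  have G: "k \<le> hi n J k \<and> hi n J k < n \<and> {k<..hi n J k} \<subseteq> J"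
    unfolding hi_def by (rule GreatestI_nat[where k=k and b=n]) (use assms in auto)
  then show "k \<le> hi n J k" "hi n J k < n" "{k<..hi n J k} \<subseteq> J" by auto
  show "k \<le> b \<Longrightarrow> b < n \<Longrightarrow> {k<..b} \<subseteq> J \<Longrightarrow> b \<le> hi n J k"
    unfolding hi_def by (rule Greatest_le_nat[where b = n]) auto
qed

lemma block:
  assumes k: "k < n" and m: "lo J k \<le> m" "m \<le> hi n J k"
  shows "lo J m = lo J k" "hi n J m = hi n J k"
proof -
  have mn: "m < n" using m hi_props(2)[OF k, where J=J] by simp
  have "{lo J k<..m} \<subseteq> J" using ioc_union[OF lo_props(2)[where J=J and k=k] hi_props(3)[OF k, where J=J]] m by auto
  then have a: "lo J m \<le> lo J k" using lo_props(3)[OF m(1)] by blast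
  have "lo J m \<le> k" using a lo_props(1)[where J=J and k=k] by simp
  moreover have "{lo J m<..k} \<subseteq> J"
  proof (cases "m \<le> k")
    case True
    have "{m<..k} \<subseteq> J" using lo_props(2)[where J=J and k=k] m by auto
    then show ?thesis using ioc_union[OF lo_props(2)[where J=J and k=m]] by auto
  next
    case False then show ?thesis using lo_props(2)[where J=J and k=m] by auto
  qed
  ultimately have "lo J k \<le> lo J m" using lo_props(3) by blast
  then show "lo J m = lo J k" using a by simp
  have "{m<..hi n J k} \<subseteq> J" using ioc_union[OF lo_props(2)[where J=J and k=k] hi_props(3)[OF k, where J=J]] m by auto
  then have b: "hi n J k \<le> hi n J m" using hi_props(4)[OF mn] m hi_props(2)[OF k] by blast
  have "k \<le> hi n J m" using b hi_props(1)[OF k, where J=J] by simp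
  moreover have "{k<..hi n J m} \<subseteq> J"
  proof (cases "k \<le> m")
    case True
    have "{k<..m} \<subseteq> J" using hi_props(3)[OF k, where J=J] m by auto
    then show ?thesis using ioc_union[OF _ hi_props(3)[OF mn, where J=J]] by auto
  next
    case False then show ?thesis using hi_props(3)[OF mn, where J=J] by auto
  qed
  ultimately have "hi n J m \<le> hi n J k" using hi_props(4)[OF k] hi_props(2)[OF mn] by blast
  then show "hi n J m = hi n J k" using b by simp
qed

lemma wJ_bounds: assumes "k < n" shows "lo J k \<le> wJ n J k" "wJ n J k \<le> hi n J k" "wJ n J k < n"
  using wJ_lohi[OF assms, of J] lo_props(1)[where J=J and k=k] hi_props(1,2)[OF assms, where J=J] by auto

lemma wJ_lt: "k < n \<Longrightarrow> wJ n J k < n" using wJ_bounds by blast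

lemma wJ_invol: "wJ n J (wJ n J k) = k"
proof (cases "k < n")
  case True
  let ?m = "wJ n J k"
  have "lo J ?m = lo J k" "hi n J ?m = hi n J k" using block[OF True, where J=J] wJ_bounds[OF True] by auto
  then show ?thesis using wJ_lohi[OF True] wJ_lohi[OF wJ_lt[OF True]] lo_props(1)[where J=J and k=k]
      hi_props(1)[OF True, where J=J] by simp
qed (simp add: wJ_out)

lemma wJ_permutes: "wJ n J permutes {..<n}"
  unfolding permutes_def
proof (intro conjI allI impI)
  show "x \<notin> {..<n} \<Longrightarrow> wJ n J x = x" for x by (simp add: wJ_out)
  show "\<exists>!x. wJ n J x = y" for y
    by (rule ex1I[of _ "wJ n J y"]) (auto simp: wJ_invol dest: arg_cong[of _ _ "wJ n J"])
qed

lemma wJ_desc_iff: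
  assumes xy: "x < y" "y < n"
  shows "wJ n J y < wJ n J x \<longleftrightarrow> {x<..y} \<subseteq> J"
proof
  assume J: "{x<..y} \<subseteq> J"
  have xn: "x < n" using xy by simp
  have "y \<le> hi n J x" using hi_props(4)[OF xn _ _ J] xy J by auto
  then have "lo J y = lo J x" "hi n J y = hi n J x"
    using block[OF xn, where m=y and J=J] lo_props(1)[where J=J and k=x] xy by auto
  then show "wJ n J y < wJ n J x" using wJ_lohi[OF xn] wJ_lohi[OF xy(2)] xy
      \<open>y \<le> hi n J x\<close> lo_props(1)[where J=J and k=x] by simp
next
  assume lt: "wJ n J y < wJ n J x"
  show "{x<..y} \<subseteq> J"
  proof (rule ccontr)
    assume "\<not> {x<..y} \<subseteq> J"
    then obtain z where "z \<in> {x<..y}" "z \<notin> J" by blast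
    then have z: "x < z" "z \<le> y" "z \<notin> J" by auto
    have xn: "x < n" using xy by simp
    have "hi n J x < z"
    proof (rule ccontr)
      assume "\<not> hi n J x < z"
      then have "z \<in> {x<..hi n J x}" using z by simp
      then show False using hi_props(3)[OF xn, where J=J] z by blast
    qed
    moreover have "z \<le> lo J y"
    proof (rule ccontr)
      assume "\<not> z \<le> lo J y"
      then have "z \<in> {lo J y<..y}" using z by simp
      then show False using lo_props(2)[where J=J and k=y] z by blast
    qed
    ultimately show False using wJ_bounds[OF xn, where J=J] wJ_bounds[OF xy(2), where J=J] lt by simp
  qed
qed

lemma wJ_step:
  assumes "Suc x < n"
  shows "Suc x \<in> J \<Longrightarrow> wJ n J x = Suc (wJ n J (Suc x))"
    and "Suc x \<notin> J \<Longrightarrow> wJ n J x < wJ n J (Suc x)"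
proof -
  have xn: "x < n" using assms by simp
  assume J: "Suc x \<in> J"
  then have "{x<..Suc x} \<subseteq> J" by (simp add: ioc_Suc)
  then have "Suc x \<le> hi n J x" using hi_props(4)[OF xn] assms by auto
  then have "lo J (Suc x) = lo J x" "hi n J (Suc x) = hi n J x"
    using block[OF xn, where m="Suc x" and J=J] lo_props(1)[where J=J and k=x] by auto
  then show "wJ n J x = Suc (wJ n J (Suc x))" using wJ_lohi[OF xn] wJ_lohi[OF assms]
      \<open>Suc x \<le> hi n J x\<close> lo_props(1)[where J=J and k=x] by simp
next
  assume "Suc x \<notin> J"
  then have "\<not> {x<..Suc x} \<subseteq> J" by (simp add: ioc_Suc)
  then have "\<not> wJ n J (Suc x) < wJ n J x" using wJ_desc_iff[of x "Suc x" n J] assms by simp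
  moreover have "wJ n J (Suc x) \<noteq> wJ n J x"
  proof
    assume "wJ n J (Suc x) = wJ n J x"
    then have "wJ n J (wJ n J (Suc x)) = wJ n J (wJ n J x)" by simp
    then show False by (simp add: wJ_invol)
  qed
  ultimately show "wJ n J x < wJ n J (Suc x)" by simp
qed

lemma wJ_pred_le: "0 < m \<Longrightarrow> m < n \<Longrightarrow> wJ n J (m - 1) \<le> Suc (wJ n J m)"
  using wJ_step[of "m - 1" n J] by (cases "m \<in> J") auto

lemma wJ_cut: assumes "c \<notin> J" "c \<le> n" "l < c" shows "wJ n J l < c"
proof -
  have ln: "l < n" using assms by simp
  have "hi n J l < c"
  proof (rule ccontr)
    assume "\<not> hi n J l < c"
    then have "c \<in> {l<..hi n J l}" using assms by simp
    then show False using hi_props(3)[OF ln, where J=J] assms by blast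
  qed
  then show ?thesis using wJ_bounds[OF ln, where J=J] by simp
qed

lemma wJ_blockstart:
  assumes "j < n" "lo J j = j"
  shows "wJ n J j = hi n J j" "Suc (hi n J j) < n \<Longrightarrow> Suc (hi n J j) \<notin> J"
proof -
  show "wJ n J j = hi n J j" using wJ_lohi[OF assms(1)] assms hi_props(1)[OF assms(1), where J=J] by simp
  assume s: "Suc (hi n J j) < n"
  show "Suc (hi n J j) \<notin> J"
  proof
    assume "Suc (hi n J j) \<in> J"
    then have "{j<..Suc (hi n J j)} \<subseteq> J" using hi_props(3)[OF assms(1), where J=J]
      by (auto simp: less_Suc_eq_le le_Suc_eq)
    then have "Suc (hi n J j) \<le> hi n J j" using hi_props(4)[OF assms(1) _ s] hi_props(1)[OF assms(1), where J=J] by simp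
    then show False by simp
  qed
qed

lemma wJ_notstart:
  assumes "j < n" "lo J j \<noteq> j"
  shows "j \<in> J" "0 < j" "wJ n J (j - 1) = Suc (wJ n J j)"
proof -
  have "lo J j < j" using lo_props(1)[where J=J and k=j] assms by simp
  then show jJ: "j \<in> J" using lo_props(2)[where J=J and k=j] by auto
  show "0 < j" using \<open>lo J j < j\<close> by simp
  then show "wJ n J (j - 1) = Suc (wJ n J j)" using wJ_step(1)[of "j - 1" n J] jJ assms by simp
qed

lemma wJ_Jprime:
  assumes k: "k \<in> J'" "0 < k" "k < n"
  defines "L \<equiv> lo J' (k - 1)"
  shows "lo J' L = L" "Suc L \<le> k" "k \<le> wJ n J' L" "L < n"
proof -
  have kn: "k - 1 < n" using k by simp
  have "{k - 1<..k} = {k}" using k ioc_Suc[of "k-1"] by simp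
  then have hk: "k \<le> hi n J' (k - 1)" using hi_props(4)[OF kn, where b=k and J=J'] k by auto
  have L1: "L \<le> k - 1" unfolding L_def by (rule lo_props(1))
  have "lo J' L = lo J' (k - 1)" "hi n J' L = hi n J' (k - 1)"
    using block[OF kn, where m=L and J=J'] L1 hk by (auto simp: L_def)
  then show "lo J' L = L" by (simp add: L_def)
  show "Suc L \<le> k" using L1 k by simp
  show "L < n" using L1 kn by simp
  then show "k \<le> wJ n J' L" using wJ_lohi[of L n J'] \<open>lo J' L = L\<close> \<open>hi n J' L = hi n J' (k - 1)\<close> hk
    by simp
qed

lemma flag_GL_Fl: "g \<in> GL n \<Longrightarrow> flag_of n g \<in> Fl n"
  by (simp add: Fl_def)

lemma istop_flag: "istopology (\<lambda>U. U \<subseteq> Fl n \<and> openin (top_of_set (GL n)) {g \<in> GL n. flag_of n g \<in> U})"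
  unfolding istopology_def
proof (rule conjI; intro allI impI)
  fix S T assume S: "S \<subseteq> Fl n \<and> openin (top_of_set (GL n)) {g \<in> GL n. flag_of n g \<in> S}"
    and T: "T \<subseteq> Fl n \<and> openin (top_of_set (GL n)) {g \<in> GL n. flag_of n g \<in> T}"
  have "{g \<in> GL n. flag_of n g \<in> S \<inter> T} = {g \<in> GL n. flag_of n g \<in> S} \<inter> {g \<in> GL n. flag_of n g \<in> T}"
    by auto
  then show "S \<inter> T \<subseteq> Fl n \<and> openin (top_of_set (GL n)) {g \<in> GL n. flag_of n g \<in> S \<inter> T}"
    using S T by auto
next
  fix K assume K: "\<forall>U\<in>K. U \<subseteq> Fl n \<and> openin (top_of_set (GL n)) {g \<in> GL n. flag_of n g \<in> U}"
  have "{g \<in> GL n. flag_of n g \<in> \<Union>K} = \<Union>((\<lambda>U. {g \<in> GL n. flag_of n g \<in> U}) ` K)" by auto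
  moreover have "openin (top_of_set (GL n)) (\<Union>((\<lambda>U. {g \<in> GL n. flag_of n g \<in> U}) ` K))"
    using K by (intro openin_Union) auto
  ultimately show "\<Union>K \<subseteq> Fl n \<and> openin (top_of_set (GL n)) {g \<in> GL n. flag_of n g \<in> \<Union>K}"
    using K by auto
qed

lemma openin_flag_top:
  "openin (flag_top n) U \<longleftrightarrow> U \<subseteq> Fl n \<and> openin (top_of_set (GL n)) {g \<in> GL n. flag_of n g \<in> U}"
  unfolding flag_top_def using istop_flag[of n] by simp

lemma topspace_flag_top: "topspace (flag_top n) = Fl n"
proof
  show "topspace (flag_top n) \<subseteq> Fl n"
    unfolding topspace_def by (auto simp: openin_flag_top)
  have "{g \<in> GL n. flag_of n g \<in> Fl n} = GL n" using flag_GL_Fl by auto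
  then have "openin (flag_top n) (Fl n)" by (simp add: openin_flag_top)
  then show "Fl n \<subseteq> topspace (flag_top n)" by (rule openin_subset)
qed

lemma closedin_flag_topI:
  assumes "C \<subseteq> Fl n" "closedin (top_of_set (GL n)) {g \<in> GL n. flag_of n g \<in> C}"
  shows "closedin (flag_top n) C"
proof -
  have "{g \<in> GL n. flag_of n g \<in> Fl n - C} = GL n - {g \<in> GL n. flag_of n g \<in> C}"
    using flag_GL_Fl by auto
  moreover have "openin (top_of_set (GL n)) (GL n - {g \<in> GL n. flag_of n g \<in> C})"
    using assms(2) by (simp add: closedin_def)
  ultimately show ?thesis using assms(1)
    by (simp add: closedin_def topspace_flag_top openin_flag_top)
qed

lemma cont_flag: "continuous_map (top_of_set (GL n)) (flag_top n) (flag_of n)"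
  unfolding continuous_map_def
  by (auto simp: topspace_flag_top flag_GL_Fl openin_flag_top)

definition ev :: "nat \<Rightarrow> cvec" where "ev m = (\<lambda>i. if i = m then 1 else 0)"

lemma permmat_matrices[simp]: "permmat n w \<in> matrices n"
  by (simp add: permmat_def matrices_def)

lemma mmul_perm_right:
  assumes "i < n" "j < n" "w j < n"
  shows "mmul n A (permmat n w) i j = A i (w j)"
proof -
  have "(\<Sum>k<n. A i k * permmat n w k j) = (\<Sum>k<n. if k = w j then A i k else 0)"
    using assms by (intro sum.cong) (auto simp: permmat_def)
  also have "\<dots> = A i (w j)" using assms by simp
  finally show ?thesis using assms by (simp add: mmul_def)
qed

lemma permmat_GL:
  assumes "\<And>x. x < n \<Longrightarrow> w x < n" "\<And>x. w (w x) = x"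
  shows "permmat n w \<in> GL n"
proof -
  have "mmul n (permmat n w) (permmat n w) = idm n"
  proof (rule ext, rule ext)
    fix i j
    show "mmul n (permmat n w) (permmat n w) i j = idm n i j"
    proof (cases "i < n \<and> j < n")
      case True
      then show ?thesis using assms mmul_perm_right[of i n j w "permmat n w"]
        by (auto simp: permmat_def idm_def)
    qed (auto simp: mmul_def idm_def)
  qed
  then show ?thesis unfolding GL_def by auto
qed

lemma wJ_GL: "permmat n (wJ n J) \<in> GL n"
  by (rule permmat_GL) (auto simp: wJ_lt wJ_invol)

lemma mcol_perm: "j < n \<Longrightarrow> w j < n \<Longrightarrow> mcol (permmat n w) j = ev (w j)"
  by (auto simp: mcol_def permmat_def ev_def)

lemma perm_in_dcoset: "idm n \<in> H \<Longrightarrow> permmat n w \<in> dcoset n H w"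
  unfolding dcoset_def
  by (rule CollectI, rule exI[of _ "idm n"], rule exI[of _ "idm n"])
     (simp add: mmul_idm_left mmul_idm_right)

lemma dcoset_GL:
  assumes "H \<subseteq> GL n" "permmat n w \<in> GL n" shows "dcoset n H w \<subseteq> GL n"
  using assms by (auto simp: dcoset_def Bup_def intro!: GL_mult)

lemma dcoset_right:
  assumes "g \<in> dcoset n H w" "b \<in> Bup n" shows "mmul n g b \<in> dcoset n H w"
proof -
  obtain b1 b2 where g: "g = mmul n (mmul n b1 (permmat n w)) b2" "b1 \<in> H" "b2 \<in> Bup n"
    using assms(1) by (auto simp: dcoset_def)
  have "mmul n g b = mmul n (mmul n b1 (permmat n w)) (mmul n b2 b)" by (simp add: g mmul_assoc)
  then show ?thesis using g assms(2) Bup_mult unfolding dcoset_def by blast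
qed

lemma dcoset_left:
  assumes "g \<in> dcoset n H w" "b \<in> H" "\<And>x y. x \<in> H \<Longrightarrow> y \<in> H \<Longrightarrow> mmul n x y \<in> H"
  shows "mmul n b g \<in> dcoset n H w"
proof -
  obtain b1 b2 where g: "g = mmul n (mmul n b1 (permmat n w)) b2" "b1 \<in> H" "b2 \<in> Bup n"
    using assms(1) by (auto simp: dcoset_def)
  have "mmul n b g = mmul n (mmul n (mmul n b b1) (permmat n w)) b2" by (simp add: g mmul_assoc)
  then show ?thesis using g assms(2,3) unfolding dcoset_def by blast
qed

lemma Nop_colspan:
  assumes "\<And>j. j < k \<Longrightarrow> Nop n (mcol g j) \<in> colspan n h k'"
  shows "Nop n ` colspan n g k \<subseteq> colspan n h k'"
proof
  fix u assume "u \<in> Nop n ` colspan n g k"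
  then obtain c where u: "u = Nop n (\<lambda>i. \<Sum>j<k. c j * g i j)" by (auto simp: colspan_def)
  have "u = (\<lambda>i. \<Sum>j\<in>{..<k}. c j * Nop n (mcol g j) i)"
    by (auto simp: u Nop_def mcol_def)
  also have "\<dots> \<in> colspan n h k'" by (rule colspan_sum) (use assms in auto)
  finally show "u \<in> colspan n h k'" .
qed

lemma zero_colspan: "(\<lambda>i. 0) \<in> colspan n g k"
  by (auto simp: colspan_def intro!: exI[of _ "\<lambda>_. 0"])

lemma Nop_ev: "m < n \<Longrightarrow> Nop n (ev m) = (if m = 0 then (\<lambda>i. 0) else ev (m - 1))"
  by (auto simp: Nop_def ev_def fun_eq_iff)

lemma perm_flag_Fl: "perm_flag n (wJ n J) \<in> Fl n"
  by (simp add: perm_flag_def flag_GL_Fl wJ_GL)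

lemma perm_flag_Pet: "perm_flag n (wJ n J) \<in> Pet n"
  unfolding Pet_def
proof (intro CollectI conjI ballI perm_flag_Fl)
  fix i assume i: "i \<in> {1..n-1}"
  let ?w = "wJ n J" and ?P = "permmat n (wJ n J)"
  have "Nop n ` colspan n ?P i \<subseteq> colspan n ?P (Suc i)"
  proof (rule Nop_colspan)
    fix j assume j: "j < i"
    have jn: "j < n" using i j by simp
    have wj: "?w j < n" using wJ_lt[OF jn] .
    show "Nop n (mcol ?P j) \<in> colspan n ?P (Suc i)"
    proof (cases "?w j = 0")
      case True then show ?thesis using mcol_perm[of j n ?w, OF jn wj] Nop_ev[OF wj] zero_colspan by simp
    next
      case False
      let ?l = "?w (?w j - 1)"
      have "?w j - 1 < n" using wj by simp
      then have ln: "?l < n" by (rule wJ_lt)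
      have "?l \<le> Suc j" using wJ_pred_le[of "?w j" n J] False wj wJ_invol[of n J j] by simp
      then have "?l < Suc i" using j by simp
      then have "mcol ?P ?l \<in> colspan n ?P (Suc i)" by (rule col_in_colspan)
      moreover have "mcol ?P ?l = ev (?w j - 1)"
        using mcol_perm[of ?l n ?w, OF ln] wJ_invol[of n J "?w j - 1"] \<open>?w j - 1 < n\<close> by simp
      ultimately show ?thesis using mcol_perm[of j n ?w, OF jn wj] Nop_ev[OF wj] False by simp
    qed
  qed
  then show "Nop n ` perm_flag n ?w i \<subseteq> perm_flag n ?w (Suc i)"
  proof -
    have "Suc i \<le> n" "i \<le> n" using i by auto
    then show ?thesis using \<open>Nop n ` colspan n ?P i \<subseteq> colspan n ?P (Suc i)\<close>
      by (simp add: perm_flag_def flag_of_def)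
  qed
qed

lemma cont_entry: "continuous_on S (\<lambda>g::cmat. g i j)"
  using continuous_on_product_then_coordinatewise[OF continuous_on_product_coordinates[of i]]
  by (rule continuous_on_subset) simp

lemma cont_entry_fst: "continuous_on S (\<lambda>p::cmat \<times> cvec. fst p i j)"
proof -
  have "continuous_on UNIV (\<lambda>p::cmat \<times> cvec. fst p)" by (rule continuous_on_fst[OF continuous_on_id])
  then have "continuous_on UNIV (\<lambda>p::cmat \<times> cvec. fst p i)" by (rule continuous_on_product_then_coordinatewise)
  then have "continuous_on UNIV (\<lambda>p::cmat \<times> cvec. fst p i j)" by (rule continuous_on_product_then_coordinatewise)
  then show ?thesis by (rule continuous_on_subset) simp
qed

lemma cont_entry_snd: "continuous_on S (\<lambda>p::cmat \<times> cvec. snd p l)"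
proof -
  have "continuous_on UNIV (\<lambda>p::cmat \<times> cvec. snd p)" by (rule continuous_on_snd[OF continuous_on_id])
  then have "continuous_on UNIV (\<lambda>p::cmat \<times> cvec. snd p l)" by (rule continuous_on_product_then_coordinatewise)
  then show ?thesis by (rule continuous_on_subset) simp
qed

lemma closed_entry_zero: "closed {g::cmat. g i j = 0}"
  using closed_Collect_eq[OF cont_entry continuous_on_const] by simp

definition CX :: "nat \<Rightarrow> nat set \<Rightarrow> (nat \<Rightarrow> cvec set) set" where
  "CX n J = {F \<in> Fl n. \<forall>c. c \<notin> J \<longrightarrow> 0 < c \<longrightarrow> c < n \<longrightarrow> (\<forall>v\<in>F c. \<forall>i. c \<le> i \<longrightarrow> v i = 0)}"

definition ZX :: "nat \<Rightarrow> nat set \<Rightarrow> cmat set" where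
  "ZX n J = {g. \<forall>c i j. c \<notin> J \<longrightarrow> c < n \<longrightarrow> j < c \<longrightarrow> c \<le> i \<longrightarrow> g i j = 0}"

lemma CX_pre: assumes "g \<in> GL n" shows "flag_of n g \<in> CX n J \<longleftrightarrow> g \<in> ZX n J"
proof
  assume "flag_of n g \<in> CX n J"
  then have h: "\<And>c v i. c \<notin> J \<Longrightarrow> 0 < c \<Longrightarrow> c < n \<Longrightarrow> v \<in> colspan n g c \<Longrightarrow> c \<le> i \<Longrightarrow> v i = 0"
    by (auto simp: CX_def flag_of_def)
  show "g \<in> ZX n J" unfolding ZX_def
  proof (intro CollectI allI impI)
    fix c i j assume "c \<notin> J" "c < n" "j < c" "c \<le> i"
    then show "g i j = 0" using h[of c "mcol g j" i] col_in_colspan[of j c g n] by (simp add: mcol_def)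
  qed
next
  assume Z: "g \<in> ZX n J"
  show "flag_of n g \<in> CX n J" unfolding CX_def
  proof (intro CollectI conjI allI impI ballI flag_GL_Fl assms)
    fix c v i assume c: "c \<notin> J" "0 < c" "c < n" and v: "v \<in> flag_of n g c" and i: "c \<le> i"
    obtain d where d: "v = (\<lambda>i. \<Sum>j<c. d j * g i j)" using v c by (auto simp: flag_of_def colspan_def)
    have "g i j = 0" if "j < c" for j using Z c i that by (auto simp: ZX_def)
    then show "v i = 0" by (simp add: d)
  qed
qed

lemma closed_ZX: "closed (ZX n J)"
proof -
  have "ZX n J = (\<Inter>t\<in>{(c,i,j). c \<notin> J \<and> c < n \<and> j < c \<and> c \<le> i}.
            {g. g (fst (snd t)) (snd (snd t)) = 0})"
    by (auto simp: ZX_def)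
  then show ?thesis using closed_entry_zero by auto
qed

lemma dcoset_ZX: "dcoset n (Bup n) (wJ n J) \<subseteq> ZX n J"
proof
  fix g assume "g \<in> dcoset n (Bup n) (wJ n J)"
  then obtain b1 b2 where g: "g = mmul n (mmul n b1 (permmat n (wJ n J))) b2" "b1 \<in> Bup n" "b2 \<in> Bup n"
    by (auto simp: dcoset_def)
  show "g \<in> ZX n J" unfolding ZX_def
  proof (intro CollectI allI impI)
    fix c i j assume c: "c \<notin> J" "c < n" and ji: "j < c" "c \<le> i"
    show "g i j = 0"
    proof (cases "i < n")
      case True
      have "mmul n b1 (permmat n (wJ n J)) i l * b2 l j = 0" if "l < n" for l
      proof (cases "l \<le> j")
        case True
        have "wJ n J l < c" using wJ_cut[of c J n l] c True ji by simp
        then have "b1 i (wJ n J l) = 0" using g(2) ji by (auto simp: Bup_def)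
        then show ?thesis using mmul_perm_right[of i n l "wJ n J" b1] \<open>i < n\<close> that wJ_lt[OF that] by simp
      next
        case False then show ?thesis using g(3) by (auto simp: Bup_def)
      qed
      then have "(\<Sum>l<n. mmul n b1 (permmat n (wJ n J)) i l * b2 l j) = 0"
        by (intro sum.neutral) (simp del: mult_eq_0_iff)
      moreover have "g i j = (\<Sum>l<n. mmul n b1 (permmat n (wJ n J)) i l * b2 l j)"
        using True ji c unfolding g by (subst mmul_def) simp
      ultimately show ?thesis by simp
    qed (simp add: g mmul_def)
  qed
qed

lemma Schubert_sub_CX: "Schubert n (wJ n J) \<subseteq> CX n J"
  unfolding Schubert_def
proof (rule closure_of_minimal)
  have GL: "dcoset n (Bup n) (wJ n J) \<subseteq> GL n"
    by (rule dcoset_GL) (auto simp: Bup_def wJ_GL)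
  show "flag_of n ` dcoset n (Bup n) (wJ n J) \<subseteq> CX n J"
    using GL dcoset_ZX CX_pre by blast
  show "closedin (flag_top n) (CX n J)"
  proof (rule closedin_flag_topI)
    show "CX n J \<subseteq> Fl n" by (auto simp: CX_def)
    have "{g \<in> GL n. flag_of n g \<in> CX n J} = GL n \<inter> ZX n J" using CX_pre by blast
    then show "closedin (top_of_set (GL n)) {g \<in> GL n. flag_of n g \<in> CX n J}"
      using closed_ZX closedin_closed_Int by metis
  qed
qed

definition KK :: "nat \<Rightarrow> cvec set" where
  "KK j = {c. (\<forall>l. Suc j \<le> l \<longrightarrow> c l = 0) \<and> (\<Sum>l<Suc j. cmod (c l)) = 1}"

definition DD :: "nat \<Rightarrow> nat \<Rightarrow> nat \<Rightarrow> cmat set" where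
  "DD n j m = {g. \<exists>c\<in>KK j. \<forall>i<m. (\<Sum>l<Suc j. c l * g i l) = 0}"

lemma compact_KK: "compact (KK j)"
proof -
  have "compactin (product_topology (\<lambda>_. euclidean) UNIV) (PiE UNIV (\<lambda>_::nat. cball (0::complex) 1))"
    by (simp add: compactin_PiE)
  then have cP: "compact (PiE UNIV (\<lambda>_::nat. cball (0::complex) 1))"
    by (simp add: euclidean_product_topology)
  have c1: "closed {c::cvec. c l = 0}" for l
    by (intro closed_Collect_eq continuous_on_product_coordinates continuous_on_const)
  have "closed (\<Inter>l\<in>{Suc j..}. {c::cvec. c l = 0})" by (rule closed_INT, rule ballI, rule c1)
  moreover have "closed {c::cvec. (\<Sum>l<Suc j. cmod (c l)) = 1}"
    by (rule closed_Collect_eq) (intro continuous_intros continuous_on_product_coordinates)+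
  ultimately have cl: "closed ((\<Inter>l\<in>{Suc j..}. {c::cvec. c l = 0}) \<inter> {c::cvec. (\<Sum>l<Suc j. cmod (c l)) = 1})"
    by (rule closed_Int)
  have eq: "KK j = ((\<Inter>l\<in>{Suc j..}. {c::cvec. c l = 0}) \<inter> {c::cvec. (\<Sum>l<Suc j. cmod (c l)) = 1})
     \<inter> PiE UNIV (\<lambda>_::nat. cball (0::complex) 1)"
  proof -
    have "cmod (c l) \<le> 1" if "c \<in> KK j" for c l
    proof (cases "l < Suc j")
      case True
      have "cmod (c l) \<le> (\<Sum>l<Suc j. cmod (c l))"
        using True by (intro member_le_sum) auto
      then show ?thesis using that by (simp add: KK_def)
    next
      case False then show ?thesis using that by (simp add: KK_def)
    qed
    then show ?thesis by (auto simp: KK_def PiE_def)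
  qed
  show ?thesis unfolding eq by (rule closed_Int_compact[OF cl cP])
qed

lemma closed_DD: "closed (DD n j m)"
proof -
  let ?T' = "{p::cmat \<times> cvec. \<forall>i<m. (\<Sum>l<Suc j. snd p l * fst p i l) = 0}"
  let ?T = "(UNIV \<times> KK j) \<inter> ?T'"
  have eqT': "?T' = (\<Inter>i\<in>{..<m}. {p. (\<Sum>l<Suc j. snd p l * fst p i l) = 0})" by auto
  have ci: "closed {p::cmat \<times> cvec. (\<Sum>l<Suc j. snd p l * fst p i l) = 0}" for i
    by (rule closed_Collect_eq) (intro continuous_intros cont_entry_fst cont_entry_snd)+
  have "closed ?T'" unfolding eqT' by (rule closed_INT, rule ballI, rule ci)
  then have cT: "closedin (top_of_set (UNIV \<times> KK j)) ?T" by (rule closedin_closed_Int)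
  have eqT: "prod_topology euclidean (subtopology euclidean (KK j)) = top_of_set (UNIV \<times> KK j)"
    by (metis subtopology_Times prod_topology_euclidean subtopology_UNIV)
  have "closedin (prod_topology euclidean (subtopology euclidean (KK j))) ?T" unfolding eqT by (rule cT)
  moreover have "closed_map (prod_topology euclidean (subtopology euclidean (KK j))) euclidean fst"
    by (rule closed_map_fst) (rule compact_space_subtopology, simp add: compact_KK)
  ultimately have cc: "closedin euclidean (fst ` ?T)" unfolding closed_map_def by blast
  have e: "fst ` ?T = DD n j m"
  proof (rule Set.set_eqI)
    fix g show "g \<in> fst ` ?T \<longleftrightarrow> g \<in> DD n j m"
    proof
      assume "g \<in> fst ` ?T"
      then obtain p where p: "p \<in> ?T" "g = fst p" by blast
      then have "snd p \<in> KK j" "\<forall>i<m. (\<Sum>l<Suc j. snd p l * fst p i l) = 0" by auto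
      then show "g \<in> DD n j m" unfolding DD_def p(2) by blast
    next
      assume "g \<in> DD n j m"
      then obtain c where "c \<in> KK j" "\<forall>i<m. (\<Sum>l<Suc j. c l * g i l) = 0" unfolding DD_def by blast
      then have "(g, c) \<in> ?T" by simp
      then show "g \<in> fst ` ?T" by (rule image_eqI[rotated]) simp
    qed
  qed
  show ?thesis unfolding closed_closedin e[symmetric] by (rule cc)
qed

lemma GL_inj:
  assumes g: "g \<in> GL n" and c: "\<And>l. n \<le> l \<Longrightarrow> c l = 0"
    and z: "\<And>i. (\<Sum>l<n. c l * g i l) = 0"
  shows "c l0 = 0"
proof (cases "l0 < n")
  case True
  from g obtain gi where gi: "mmul n gi g = idm n" unfolding GL_def by blast
  have "0 = (\<Sum>i<n. gi l0 i * (\<Sum>l<n. c l * g i l))" using z by simp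
  also have "\<dots> = (\<Sum>i<n. \<Sum>l<n. c l * (gi l0 i * g i l))"
    by (simp add: sum_distrib_left ac_simps)
  also have "\<dots> = (\<Sum>l<n. \<Sum>i<n. c l * (gi l0 i * g i l))" by (rule sum.swap)
  also have "\<dots> = (\<Sum>l<n. c l * (\<Sum>i<n. gi l0 i * g i l))"
    by (simp add: sum_distrib_left)
  also have "\<dots> = (\<Sum>l<n. c l * idm n l0 l)"
    using True by (intro sum.cong refl) (simp flip: gi add: mmul_def)
  also have "\<dots> = (\<Sum>l<n. if l = l0 then c l else 0)"
    using True by (intro sum.cong refl) (auto simp: idm_def)
  also have "\<dots> = c l0" using True by simp
  finally show ?thesis by simp
qed (use c in simp)

lemma DD_eq: assumes "j < n" shows
  "{g \<in> GL n. \<exists>v\<in>colspan n g (Suc j). v \<noteq> (\<lambda>i. 0) \<and> (\<forall>i<m. v i = 0)} = GL n \<inter> DD n j m"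
proof (rule Set.set_eqI, rule iffI)
  fix g assume "g \<in> {g \<in> GL n. \<exists>v\<in>colspan n g (Suc j). v \<noteq> (\<lambda>i. 0) \<and> (\<forall>i<m. v i = 0)}"
  then obtain c where g: "g \<in> GL n" and v0: "(\<lambda>i. \<Sum>l<Suc j. c l * g i l) \<noteq> (\<lambda>i. 0)"
    and vz: "\<And>i. i < m \<Longrightarrow> (\<Sum>l<Suc j. c l * g i l) = 0"
    by (auto simp: colspan_def)
  define s where "s = (\<Sum>l<Suc j. cmod (c l))"
  have "s \<noteq> 0"
  proof
    assume "s = 0"
    then have "\<forall>l\<in>{..<Suc j}. cmod (c l) = 0" unfolding s_def
      by (subst sum_nonneg_eq_0_iff[symmetric]) auto
    then have "c l = 0" if "l < Suc j" for l using that by auto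
    then have "(\<lambda>i. \<Sum>l<Suc j. c l * g i l) = (\<lambda>i. 0)" by simp
    then show False using v0 by simp
  qed
  have s0: "0 \<le> s" by (simp add: s_def sum_nonneg)
  define c' where "c' l = (if l < Suc j then c l / of_real s else 0)" for l
  have "c' \<in> KK j"
  proof -
    have "(\<Sum>l<Suc j. cmod (c' l)) = (\<Sum>l<Suc j. cmod (c l) / s)"
      using \<open>s \<noteq> 0\<close> s0 by (intro sum.cong refl) (simp add: c'_def norm_divide)
    also have "\<dots> = 1" using \<open>s \<noteq> 0\<close> by (simp add: s_def flip: sum_divide_distrib)
    finally show ?thesis by (auto simp: KK_def c'_def)
  qed
  moreover have "(\<Sum>l<Suc j. c' l * g i l) = 0" if "i < m" for i
  proof -
    have "(\<Sum>l<Suc j. c' l * g i l) = (\<Sum>l<Suc j. c l * g i l) / of_real s"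
      by (simp add: c'_def sum_divide_distrib add_divide_distrib)
    then show ?thesis using vz[OF that] by simp
  qed
  ultimately show "g \<in> GL n \<inter> DD n j m" using g by (auto simp: DD_def)
next
  fix g assume "g \<in> GL n \<inter> DD n j m"
  then obtain c where g: "g \<in> GL n" and c: "c \<in> KK j" and z: "\<And>i. i < m \<Longrightarrow> (\<Sum>l<Suc j. c l * g i l) = 0"
    by (auto simp: DD_def)
  let ?v = "\<lambda>i. \<Sum>l<Suc j. c l * g i l"
  have "?v \<noteq> (\<lambda>i. 0)"
  proof
    assume v0: "?v = (\<lambda>i. 0)"
    have sn: "(\<Sum>l<n. c l * g i l) = ?v i" for i
    proof -
      have "(\<Sum>l<n. c l * g i l) = (\<Sum>l<Suc j. c l * g i l)"
        using assms c by (intro sum.mono_neutral_right) (auto simp: KK_def)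
      then show ?thesis by simp
    qed
    have "c l0 = 0" for l0
      by (rule GL_inj[OF g]) (use assms c v0 sn in \<open>auto simp: KK_def fun_eq_iff\<close>)
    then show False using c by (simp add: KK_def)
  qed
  moreover have "?v \<in> colspan n g (Suc j)" by (auto simp: colspan_def)
  ultimately show "g \<in> {g \<in> GL n. \<exists>v\<in>colspan n g (Suc j). v \<noteq> (\<lambda>i. 0) \<and> (\<forall>i<m. v i = 0)}"
    using g z by blast
qed

definition CO :: "nat \<Rightarrow> (nat \<Rightarrow> nat) \<Rightarrow> (nat \<Rightarrow> cvec set) set" where
  "CO n w = {F \<in> Fl n. \<forall>j<n. \<exists>v\<in>F (Suc j). v \<noteq> (\<lambda>i. 0) \<and> (\<forall>i<w j. v i = 0)}"

lemma CO_pre: assumes g: "g \<in> GL n"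
  shows "flag_of n g \<in> CO n w \<longleftrightarrow> g \<in> (\<Inter>j\<in>{..<n}. DD n j (w j))"
proof -
  have "(\<exists>v\<in>flag_of n g (Suc j). v \<noteq> (\<lambda>i. 0) \<and> (\<forall>i<w j. v i = 0)) \<longleftrightarrow> g \<in> DD n j (w j)"
    if "j < n" for j
  proof -
    have "flag_of n g (Suc j) = colspan n g (Suc j)" using that by (simp add: flag_of_def)
    moreover have "g \<in> {g \<in> GL n. \<exists>v\<in>colspan n g (Suc j). v \<noteq> (\<lambda>i. 0) \<and> (\<forall>i<w j. v i = 0)}
       \<longleftrightarrow> g \<in> GL n \<inter> DD n j (w j)" using DD_eq[OF that, of "w j"] by simp
    ultimately show ?thesis using g by simp
  qed
  then show ?thesis using g by (auto simp: CO_def flag_GL_Fl)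
qed

lemma ev_upper: assumes b: "b \<in> Bup n" and j: "j < n" shows "ev j \<in> colspan n b (Suc j)"
proof -
  have bm: "b \<in> matrices n" "b \<in> GL n" using b by (auto simp: Bup_def GL_def)
  have sub: "colspan n b (Suc j) \<subseteq> colspan n (idm n) (Suc j)"
  proof (rule colspan_subset)
    fix l assume l: "l < Suc j"
    have "mcol b l = (\<lambda>i. \<Sum>m<Suc j. b m l * idm n i m)"
    proof
      fix i
      have "(\<Sum>m<Suc j. b m l * idm n i m) = (\<Sum>m<Suc j. if m = i then (if i < n then b i l else 0) else 0)"
        by (intro sum.cong refl) (auto simp: idm_def)
      also have "\<dots> = (if i < Suc j \<and> i < n then b i l else 0)" by simp
      also have "\<dots> = b i l"
      proof (cases "i < Suc j \<and> i < n")
        case False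
        then have "\<not> i < Suc j \<or> \<not> i < n" by simp
        then show ?thesis
        proof
          assume "\<not> i < Suc j" then show ?thesis using b l by (auto simp: Bup_def)
        next
          assume "\<not> i < n" then show ?thesis using bm(1) by (auto simp: matrices_def)
        qed
      qed simp
      finally show "mcol b l i = (\<Sum>m<Suc j. b m l * idm n i m)" by (simp add: mcol_def)
    qed
    then show "mcol b l \<in> colspan n (idm n) (Suc j)" by (auto simp: colspan_def)
  qed
  have "colspan n (idm n) (Suc j) \<subseteq> colspan n b (Suc j)"
    by (rule colspan_GL_eq[OF bm(2) idm_GL _ sub]) (use j in simp)
  moreover have "mcol (idm n) j \<in> colspan n (idm n) (Suc j)" by (rule col_in_colspan) simp
  moreover have "mcol (idm n) j = ev j" using j by (auto simp: mcol_def idm_def ev_def)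
  ultimately show ?thesis by auto
qed

lemma colspan_mmul:
  assumes B: "B \<in> matrices n" and x: "x \<in> colspan n B k"
  shows "(\<lambda>i. if i < n then \<Sum>m<n. A i m * x m else 0) \<in> colspan n (mmul n A B) k"
proof -
  obtain c where c: "x = (\<lambda>i. \<Sum>l<k. c l * B i l)" using x by (auto simp: colspan_def)
  have "(\<lambda>i. if i < n then \<Sum>m<n. A i m * x m else 0) = (\<lambda>i. \<Sum>l<k. c l * mmul n A B i l)"
  proof
    fix i
    show "(if i < n then \<Sum>m<n. A i m * x m else 0) = (\<Sum>l<k. c l * mmul n A B i l)"
    proof (cases "i < n")
      case True
      have "(\<Sum>m<n. A i m * x m) = (\<Sum>m<n. \<Sum>l<k. c l * (A i m * B m l))"
        by (simp add: c sum_distrib_left ac_simps)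
      also have "\<dots> = (\<Sum>l<k. \<Sum>m<n. c l * (A i m * B m l))" by (rule sum.swap)
      also have "\<dots> = (\<Sum>l<k. c l * (\<Sum>m<n. A i m * B m l))" by (simp add: sum_distrib_left)
      also have "\<dots> = (\<Sum>l<k. c l * mmul n A B i l)"
      proof (intro sum.cong refl)
        fix l
        show "c l * (\<Sum>m<n. A i m * B m l) = c l * mmul n A B i l"
        proof (cases "l < n")
          case False
          then have "B m l = 0" for m using B by (auto simp: matrices_def)
          then show ?thesis using False by (simp add: mmul_def)
        qed (use True in \<open>simp add: mmul_def\<close>)
      qed
      finally show ?thesis using True by simp
    qed (simp add: mmul_def)
  qed
  then show ?thesis by (auto simp: colspan_def)
qed

lemma dcoset_CO:
  assumes wl: "\<And>x. x < n \<Longrightarrow> w x < n"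
  shows "g \<in> dcoset n (Blow n) w \<Longrightarrow> g \<in> GL n \<Longrightarrow> flag_of n g \<in> CO n w"
proof -
  assume "g \<in> dcoset n (Blow n) w" and gGL: "g \<in> GL n"
  then obtain b1 b2 where g: "g = mmul n (mmul n b1 (permmat n w)) b2" "b1 \<in> Blow n" "b2 \<in> Bup n"
    by (auto simp: dcoset_def)
  have b1m: "b1 \<in> matrices n" and b1GL: "b1 \<in> GL n" using g(2) by (auto simp: Blow_def GL_def)
  have b2m: "b2 \<in> matrices n" using g(3) by (auto simp: Bup_def GL_def)
  have "\<exists>v\<in>colspan n g (Suc j). v \<noteq> (\<lambda>i. 0) \<and> (\<forall>i<w j. v i = 0)" if j: "j < n" for j
  proof -
    let ?A = "mmul n b1 (permmat n w)"
    have "(\<lambda>i. if i < n then \<Sum>m<n. ?A i m * ev j m else 0) \<in> colspan n g (Suc j)"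
      unfolding g(1) by (rule colspan_mmul[OF b2m ev_upper[OF g(3) j]])
    moreover have "(\<lambda>i. if i < n then \<Sum>m<n. ?A i m * ev j m else 0) = mcol b1 (w j)"
    proof
      fix i
      show "(if i < n then \<Sum>m<n. ?A i m * ev j m else 0) = mcol b1 (w j) i"
      proof (cases "i < n")
        case True
        have "(\<Sum>m<n. ?A i m * ev j m) = (\<Sum>m<n. if m = j then ?A i m else 0)"
          by (intro sum.cong refl) (simp add: ev_def)
        also have "\<dots> = ?A i j" using j by simp
        also have "\<dots> = b1 i (w j)" using mmul_perm_right[of i n j w b1, OF True j wl[OF j]] .
        finally show ?thesis using True by (simp add: mcol_def)
      qed (use b1m in \<open>auto simp: mcol_def matrices_def\<close>)
    qed
    moreover have "mcol b1 (w j) \<noteq> (\<lambda>i. 0)"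
    proof
      assume z: "mcol b1 (w j) = (\<lambda>i. 0)"
      obtain bi where bi: "mmul n bi b1 = idm n" using b1GL unfolding GL_def by blast
      have "1 = mmul n bi b1 (w j) (w j)" using bi wl[OF j] by (simp add: idm_def)
      also have "\<dots> = (\<Sum>m<n. bi (w j) m * b1 m (w j))" using wl[OF j] by (simp add: mmul_def)
      also have "\<dots> = 0" using z by (simp add: mcol_def fun_eq_iff)
      finally show False by simp
    qed
    moreover have "mcol b1 (w j) i = 0" if "i < w j" for i
      using g(2) that by (auto simp: Blow_def mcol_def)
    ultimately show ?thesis by metis
  qed
  moreover have "flag_of n g (Suc j) = colspan n g (Suc j)" if "j < n" for j
    using that by (simp add: flag_of_def)
  ultimately show "flag_of n g \<in> CO n w" using gGL flag_GL_Fl[OF gGL] by (simp add: CO_def)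
qed

lemma dualSchubert_sub_CO: "dualSchubert n (wJ n J) \<subseteq> CO n (wJ n J)"
  unfolding dualSchubert_def
proof (rule closure_of_minimal)
  have GL: "dcoset n (Blow n) (wJ n J) \<subseteq> GL n"
    by (rule dcoset_GL) (auto simp: Blow_def wJ_GL)
  show "flag_of n ` dcoset n (Blow n) (wJ n J) \<subseteq> CO n (wJ n J)"
    using GL dcoset_CO[of n "wJ n J"] wJ_lt by blast
  show "closedin (flag_top n) (CO n (wJ n J))"
  proof (rule closedin_flag_topI)
    show "CO n (wJ n J) \<subseteq> Fl n" by (auto simp: CO_def)
    have "{g \<in> GL n. flag_of n g \<in> CO n (wJ n J)} = GL n \<inter> (\<Inter>j\<in>{..<n}. DD n j (wJ n J j))"
      using CO_pre by blast
    moreover have "closed (\<Inter>j\<in>{..<n}. DD n j (wJ n J j))"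
      by (rule closed_INT, rule ballI, rule closed_DD)
    ultimately show "closedin (top_of_set (GL n)) {g \<in> GL n. flag_of n g \<in> CO n (wJ n J)}"
      using closedin_closed_Int by metis
  qed
qed

lemma unique_flag:
  assumes F: "F \<in> CX n J" "F \<in> CO n (wJ n J)" "F \<in> Pet n"
  shows "F = perm_flag n (wJ n J)"
proof -
  let ?w = "wJ n J" and ?P = "permmat n (wJ n J)"
  obtain g where g: "g \<in> GL n" "F = flag_of n g" using F(1) by (auto simp: CX_def Fl_def)
  have gm: "g \<in> matrices n" using g by (auto simp: GL_def)
  have Fk: "F k = colspan n g k" if "k \<le> n" for k using that g by (simp add: flag_of_def)
  have CX: "\<And>c v i. c \<notin> J \<Longrightarrow> 0 < c \<Longrightarrow> c < n \<Longrightarrow> v \<in> colspan n g c \<Longrightarrow> c \<le> i \<Longrightarrow> v i = 0"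
    using F(1) Fk by (auto simp: CX_def)
  have CO: "\<And>j. j < n \<Longrightarrow> \<exists>v\<in>colspan n g (Suc j). v \<noteq> (\<lambda>i. 0) \<and> (\<forall>i<?w j. v i = 0)"
    using F(2) Fk by (auto simp: CO_def)
  have Pt: "Nop n ` colspan n g i \<subseteq> colspan n g (Suc i)" if "1 \<le> i" "i < n" for i
  proof -
    have "i \<in> {1..n-1}" using that by simp
    then have "Nop n ` F i \<subseteq> F (Suc i)" using F(3) by (auto simp: Pet_def)
    then show ?thesis using Fk[of i] Fk[of "Suc i"] that by simp
  qed
  have E: "j < n \<longrightarrow> ev (?w j) \<in> colspan n g (Suc j)" for j
  proof (induction j rule: less_induct)
    case (less j)
    show ?case
    proof
      assume j: "j < n"
      show "ev (?w j) \<in> colspan n g (Suc j)"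
      proof (cases "lo J j = j")
        case True
        let ?h = "hi n J j"
        have wh: "?w j = ?h" using wJ_blockstart(1)[OF j True] .
        obtain v where v: "v \<in> colspan n g (Suc j)" "v \<noteq> (\<lambda>i. 0)" "\<And>i. i < ?h \<Longrightarrow> v i = 0"
          using CO[OF j] wh by auto
        have vgt: "v i = 0" if "?h < i" for i
        proof (cases "Suc ?h < n")
          case True
          have "Suc ?h \<notin> J" using wJ_blockstart(2)[OF j \<open>lo J j = j\<close> True] .
          moreover have "v \<in> colspan n g (Suc ?h)"
            using v(1) colspan_mono[of "Suc j" "Suc ?h" n g] hi_props(1)[OF j, where J=J] by auto
          ultimately show ?thesis using CX[of "Suc ?h" v i] True that by simp
        next
          case False
          then have "n \<le> i" using that by simp
          then show ?thesis using colspan_outside[OF gm v(1)] by simp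
        qed
        have vform: "v = (\<lambda>i. v ?h * ev ?h i)"
        proof
          fix i show "v i = v ?h * ev ?h i"
            using v(3)[of i] vgt[of i] by (cases "i < ?h"; cases "?h < i") (auto simp: ev_def)
        qed
        have "v ?h \<noteq> 0"
        proof
          assume "v ?h = 0" then have "v = (\<lambda>i. 0)" using vform by simp
          then show False using v(2) by simp
        qed
        have "(\<lambda>i. (1 / v ?h) * v i) \<in> colspan n g (Suc j)" by (rule colspan_smult[OF v(1)])
        moreover have "(\<lambda>i. (1 / v ?h) * v i) = ev ?h"
          using \<open>v ?h \<noteq> 0\<close> by (subst vform) (simp add: fun_eq_iff)
        ultimately show ?thesis using wh by simp
      next
        case False
        have jJ: "j \<in> J" "0 < j" "?w (j - 1) = Suc (?w j)" using wJ_notstart[OF j False] by auto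
        have IH: "ev (?w (j - 1)) \<in> colspan n g j" using less.IH[of "j - 1"] jJ j by simp
        have wl: "?w (j - 1) < n" using j by (intro wJ_lt) simp
        have "Nop n (ev (?w (j - 1))) \<in> colspan n g (Suc j)" using Pt[of j] jJ j IH by auto
        moreover have "Nop n (ev (?w (j - 1))) = ev (?w j)" using Nop_ev[OF wl] jJ by simp
        ultimately show ?thesis by simp
      qed
    qed
  qed
  have PGL: "?P \<in> GL n" by (rule wJ_GL)
  have "colspan n g k = colspan n ?P k" if k: "k \<le> n" for k
  proof -
    have sub: "colspan n ?P k \<subseteq> colspan n g k"
    proof (rule colspan_subset)
      fix j assume jk: "j < k"
      have jn: "j < n" using jk k by simp
      have "mcol ?P j = ev (?w j)" using mcol_perm[of j n ?w] jn wJ_lt[OF jn] by simp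
      then show "mcol ?P j \<in> colspan n g k"
        using E[of j] jn colspan_mono[of "Suc j" k n g] jk by auto
    qed
    moreover have "colspan n g k \<subseteq> colspan n ?P k" by (rule colspan_GL_eq[OF PGL g(1) k sub])
    ultimately show ?thesis by blast
  qed
  then show ?thesis using g by (auto simp: perm_flag_def flag_of_def fun_eq_iff)
qed

lemma CX_CO_sub:
  assumes F: "F \<in> CX n J" "F \<in> CO n (wJ n J')" and J': "J' \<subseteq> {1..n-1}"
  shows "J' \<subseteq> J"
proof
  fix k assume kJ': "k \<in> J'"
  show "k \<in> J"
  proof (rule ccontr)
    assume kJ: "k \<notin> J"
    have "k \<in> {1..n-1}" using kJ' J' by auto
    then have k: "0 < k" "k < n" by auto
    define L where "L = lo J' (k - 1)"
    have L: "lo J' L = L" "Suc L \<le> k" "k \<le> wJ n J' L" "L < n"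
      using wJ_Jprime[OF kJ' k] by (auto simp: L_def)
    obtain g where g: "g \<in> GL n" "F = flag_of n g" using F(1) by (auto simp: CX_def Fl_def)
    have Fk: "F k' = colspan n g k'" if "k' \<le> n" for k' using that g by (simp add: flag_of_def)
    obtain v where v: "v \<in> colspan n g (Suc L)" "v \<noteq> (\<lambda>i. 0)" "\<And>i. i < wJ n J' L \<Longrightarrow> v i = 0"
      using F(2) Fk[of "Suc L"] L(4) by (auto simp: CO_def)
    have "v \<in> colspan n g k" using v(1) colspan_mono[OF L(2)] by auto
    then have vk: "v i = 0" if "k \<le> i" for i using F(1) Fk[of k] k kJ that by (auto simp: CX_def)
    have "v x = 0" for x
    proof (cases "k \<le> x")
      case True then show ?thesis by (rule vk)
    next
      case False then show ?thesis using v(3)[of x] L(3) by simp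
    qed
    then have "v = (\<lambda>i. 0)" by auto
    then show False using v(2) by simp
  qed
qed

lemma zero_closure: "(0::complex) \<in> closure (UNIV - {0})"
  using islimpt_punctured[of "0::complex" UNIV] islimpt_UNIV[of "0::complex"]
  by (simp add: closure_def)

definition Eadd :: "nat \<Rightarrow> nat \<Rightarrow> nat \<Rightarrow> complex \<Rightarrow> cmat" where
  "Eadd n r r' a = (\<lambda>i j. if i < n \<and> j < n then (if i = j then 1 else 0) + (if i = r \<and> j = r' then a else 0) else 0)"

definition Dsc :: "nat \<Rightarrow> nat \<Rightarrow> complex \<Rightarrow> cmat" where
  "Dsc n c a = (\<lambda>i j. if i < n \<and> j < n \<and> i = j then (if i = c then a else 1) else 0)"

lemma Eadd_matrices[simp]: "Eadd n r r' a \<in> matrices n" by (simp add: Eadd_def matrices_def)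
lemma Dsc_matrices[simp]: "Dsc n c a \<in> matrices n" by (simp add: Dsc_def matrices_def)

lemma Eadd_left:
  assumes A: "A \<in> matrices n" and r: "r < n" "r' < n" and ij: "i < n" "j < n"
  shows "mmul n (Eadd n r r' a) A i j = A i j + (if i = r then a * A r' j else 0)"
proof -
  have "(\<Sum>k<n. Eadd n r r' a i k * A k j) =
        (\<Sum>k<n. (if k = i then A k j else 0) + (if i = r \<and> k = r' then a * A k j else 0))"
    using ij by (intro sum.cong refl) (auto simp: Eadd_def algebra_simps)
  also have "\<dots> = A i j + (if i = r then a * A r' j else 0)"
    using ij r by (simp add: sum.distrib algebra_simps)
  finally show ?thesis using ij by (simp add: mmul_def)
qed

lemma Eadd_right:
  assumes A: "A \<in> matrices n" and r: "r < n" "r' < n" and ij: "i < n" "j < n"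
  shows "mmul n A (Eadd n r r' a) i j = A i j + (if j = r' then a * A i r else 0)"
proof -
  have "(\<Sum>k<n. A i k * Eadd n r r' a k j) =
        (\<Sum>k<n. (if k = j then A i k else 0) + (if k = r \<and> j = r' then a * A i k else 0))"
    using ij by (intro sum.cong refl) (auto simp: Eadd_def algebra_simps)
  also have "\<dots> = A i j + (if j = r' then a * A i r else 0)"
    using ij r by (simp add: sum.distrib algebra_simps)
  finally show ?thesis using ij by (simp add: mmul_def)
qed

lemma Dsc_right:
  assumes ij: "i < n" "j < n"
  shows "mmul n A (Dsc n c a) i j = A i j * (if j = c then a else 1)"
proof -
  have "(\<Sum>k<n. A i k * Dsc n c a k j) = (\<Sum>k<n. if k = j then A i k * (if j = c then a else 1) else 0)"
    using ij by (intro sum.cong refl) (auto simp: Dsc_def)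
  also have "\<dots> = A i j * (if j = c then a else 1)" using ij by simp
  finally show ?thesis using ij by (simp add: mmul_def)
qed


lemma Eadd_Bup: assumes "r < r'" "r' < n" shows "Eadd n r r' a \<in> Bup n"
proof -
  have "mmul n (Eadd n r r' a) (Eadd n r r' (-a)) = idm n"
  proof (rule ext, rule ext)
    fix i j show "mmul n (Eadd n r r' a) (Eadd n r r' (-a)) i j = idm n i j"
    proof (cases "i < n \<and> j < n")
      case True
      then show ?thesis using assms
        by (subst Eadd_left[OF Eadd_matrices]) (auto simp: Eadd_def idm_def)
    qed (auto simp: mmul_def idm_def)
  qed
  moreover have "mmul n (Eadd n r r' (-a)) (Eadd n r r' a) = idm n"
  proof (rule ext, rule ext)
    fix i j show "mmul n (Eadd n r r' (-a)) (Eadd n r r' a) i j = idm n i j"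
    proof (cases "i < n \<and> j < n")
      case True
      then show ?thesis using assms
        by (subst Eadd_left[OF Eadd_matrices]) (auto simp: Eadd_def idm_def)
    qed (auto simp: mmul_def idm_def)
  qed
  ultimately show ?thesis using assms unfolding Bup_def GL_def
    by (auto intro!: bexI[of _ "Eadd n r r' (-a)"]) (auto simp: Eadd_def)
qed

lemma Dsc_Bup: assumes "a \<noteq> 0" shows "Dsc n c a \<in> Bup n"
proof -
  have "mmul n (Dsc n c a) (Dsc n c (1/a)) = idm n"
  proof (rule ext, rule ext)
    fix i j show "mmul n (Dsc n c a) (Dsc n c (1/a)) i j = idm n i j"
    proof (cases "i < n \<and> j < n")
      case True
      then show ?thesis using assms by (subst Dsc_right) (auto simp: Dsc_def idm_def)
    qed (auto simp: mmul_def idm_def)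
  qed
  moreover have "mmul n (Dsc n c (1/a)) (Dsc n c a) = idm n"
  proof (rule ext, rule ext)
    fix i j show "mmul n (Dsc n c (1/a)) (Dsc n c a) i j = idm n i j"
    proof (cases "i < n \<and> j < n")
      case True
      then show ?thesis using assms by (subst Dsc_right) (auto simp: Dsc_def idm_def)
    qed (auto simp: mmul_def idm_def)
  qed
  ultimately show ?thesis unfolding Bup_def GL_def
    by (auto intro!: bexI[of _ "Dsc n c (1/a)"]) (auto simp: Dsc_def)
qed

definition swp :: "(nat \<Rightarrow> nat) \<Rightarrow> nat \<Rightarrow> nat \<Rightarrow> nat" where
  "swp u i k = (if k = i then u (Suc i) else if k = Suc i then u i else u k)"

lemma cont_mmul2: "continuous_on UNIV (\<lambda>x. mmul n b1 (mmul n x b2))"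
proof (intro continuous_on_coordinatewise_then_product)
  fix i j
  show "continuous_on UNIV (\<lambda>x. mmul n b1 (mmul n x b2) i j)"
  proof (cases "i < n \<and> j < n")
    case True
    have eq: "(\<lambda>x. mmul n b1 (mmul n x b2) i j) = (\<lambda>x. \<Sum>k<n. b1 i k * (\<Sum>l<n. x k l * b2 l j))"
      using True by (auto simp: mmul_def fun_eq_iff intro!: sum.cong)
    have c: "continuous_on UNIV (\<lambda>x::cmat. \<Sum>k<n. b1 i k * (\<Sum>l<n. x k l * b2 l j))"
      by (intro continuous_intros cont_entry)
    show ?thesis unfolding eq by (rule c)
  next
    case False
    then have eq: "(\<lambda>x. mmul n b1 (mmul n x b2) i j) = (\<lambda>x. 0)" by (auto simp: mmul_def)
    show ?thesis unfolding eq by (rule continuous_on_const)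
  qed
qed

lemma step_closure:
  assumes u: "u permutes {..<n}" and i: "Suc i < n" and desc: "u (Suc i) < u i"
  shows "permmat n (swp u i) \<in> closure (dcoset n (Bup n) u)"
proof -
  have ul: "u k < n" if "k < n" for k using u that permutes_in_image by fastforce
  have uinj: "u a = u b \<longleftrightarrow> a = b" for a b using permutes_inj[OF u] by (auto dest: injD)
  let ?P = "permmat n u"
  let ?phi = "\<lambda>s::complex. (\<lambda>a b. permmat n (swp u i) a b + s * (if a = u i \<and> b = i then 1 else 0))"
  define M where "M s = mmul n (mmul n (mmul n (mmul n (Eadd n (u (Suc i)) (u i) (1/s)) ?P)
        (Dsc n i s)) (Eadd n i (Suc i) (-1))) (Dsc n (Suc i) (-1/s))" for s
  have Pent: "?P a b = (if a = u b then 1 else 0)" if "a < n" "b < n" for a b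
    using that ul by (auto simp: permmat_def)
  have Mphi: "M s = ?phi s" if s: "s \<noteq> 0" for s
  proof (rule ext, rule ext)
    fix a b
    show "M s a b = ?phi s a b"
    proof (cases "a < n \<and> b < n")
      case False
      have ui: "u i < n" using ul[of i] i by simp
      have "\<not> (a = u i \<and> b = i)" using False ui i by auto
      then have "?phi s a b = permmat n (swp u i) a b" by (simp only: if_False) simp
      also have "\<dots> = 0" unfolding permmat_def using False by (intro if_not_P) blast
      finally have "?phi s a b = 0" .
      moreover have "M s \<in> matrices n" unfolding M_def by (rule mmul_matrices)
      then have "M s a b = 0" using False unfolding matrices_def by blast
      ultimately show ?thesis by simp
    next
      case True
      then have a: "a < n" and b: "b < n" by auto
      have in1: "u (Suc i) < n" "u i < n" using ul i by auto
      let ?A1 = "mmul n (Eadd n (u (Suc i)) (u i) (1/s)) ?P"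
      let ?A2 = "mmul n ?A1 (Dsc n i s)"
      let ?A3 = "mmul n ?A2 (Eadd n i (Suc i) (-1))"
      have A1: "?A1 a' b' = (if a' = u b' then 1 else 0) + (if a' = u (Suc i) \<and> b' = i then 1/s else 0)"
        if "a' < n" "b' < n" for a' b'
        using that in1 by (subst Eadd_left) (auto simp: Pent uinj)
      have A2: "?A2 a' b' = ((if a' = u b' then 1 else 0) + (if a' = u (Suc i) \<and> b' = i then 1/s else 0))
                 * (if b' = i then s else 1)" if "a' < n" "b' < n" for a' b'
        using that by (simp add: Dsc_right A1)
      have A3: "?A3 a b = ?A2 a b + (if b = Suc i then - ?A2 a i else 0)"
        using a b i by (subst Eadd_right) auto
      have A4: "M s a b = ?A3 a b * (if b = Suc i then -1/s else 1)"
        unfolding M_def using a b by (simp add: Dsc_right)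
      have Sw: "permmat n (swp u i) a b = (if a = swp u i b then 1 else 0)"
        using a b by (simp add: permmat_def)
      have ne: "u i \<noteq> u (Suc i)" using uinj by simp
      show ?thesis
      proof (cases "b = i")
        case True
        have "M s a b = ((if a = u i then 1 else 0) + (if a = u (Suc i) then 1/s else 0)) * s"
          using A4 A3 A2[OF a b] True by simp
        also have "\<dots> = ?phi s a b" using True s ne Sw
          by (cases "a = u i"; cases "a = u (Suc i)") (auto simp: swp_def)
        finally show ?thesis .
      next
        case bi: False
        show ?thesis
        proof (cases "b = Suc i")
          case True
          have "M s a b = ((if a = u (Suc i) then 1 else 0)
               - ((if a = u i then 1 else 0) + (if a = u (Suc i) then 1/s else 0)) * s) * (-1/s)"
            using A4 A3 A2[OF a b] A2[OF a, of i] True i uinj by simp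
          also have "\<dots> = ?phi s a b" using True s ne Sw
            by (cases "a = u i"; cases "a = u (Suc i)") (auto simp: swp_def field_simps)
          finally show ?thesis .
        next
          case False
          have "M s a b = (if a = u b then 1 else 0)"
            using A4 A3 A2[OF a b] False bi by simp
          also have "\<dots> = ?phi s a b" using False bi Sw by (simp add: swp_def)
          finally show ?thesis .
        qed
      qed
    qed
  qed
  have Mdc: "M s \<in> dcoset n (Bup n) u" if s: "s \<noteq> 0" for s
  proof -
    have "mmul n (Eadd n (u (Suc i)) (u i) (1/s)) ?P \<in> dcoset n (Bup n) u"
      by (rule dcoset_left[OF perm_in_dcoset Eadd_Bup]) (use desc ul i in \<open>auto intro: Bup_mult\<close>)
    then have "mmul n (mmul n (Eadd n (u (Suc i)) (u i) (1/s)) ?P) (Dsc n i s) \<in> dcoset n (Bup n) u"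
      by (rule dcoset_right[OF _ Dsc_Bup[OF s]])
    then have "mmul n (mmul n (mmul n (Eadd n (u (Suc i)) (u i) (1/s)) ?P) (Dsc n i s)) (Eadd n i (Suc i) (-1))
       \<in> dcoset n (Bup n) u"
      by (rule dcoset_right[OF _ Eadd_Bup]) (use i in auto)
    then show ?thesis unfolding M_def
      by (rule dcoset_right[OF _ Dsc_Bup]) (use s in auto)
  qed
  have cphi: "continuous_on UNIV ?phi"
    by (intro continuous_on_coordinatewise_then_product continuous_intros)
  have "?phi ` (UNIV - {0}) \<subseteq> dcoset n (Bup n) u" using Mphi Mdc by force
  then have "?phi ` (UNIV - {0}) \<subseteq> closure (dcoset n (Bup n) u)" using closure_subset by blast
  then have "?phi ` closure (UNIV - {0}) \<subseteq> closure (dcoset n (Bup n) u)"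
    by (intro image_closure_subset continuous_on_subset[OF cphi]) auto
  then have "?phi 0 \<in> closure (dcoset n (Bup n) u)" using zero_closure by blast
  then show ?thesis by simp
qed

lemma dcoset_sub_closure:
  assumes "permmat n u' \<in> closure (dcoset n (Bup n) u)"
  shows "closure (dcoset n (Bup n) u') \<subseteq> closure (dcoset n (Bup n) u)"
proof (rule closure_minimal[OF _ closed_closure])
  show "dcoset n (Bup n) u' \<subseteq> closure (dcoset n (Bup n) u)"
  proof
    fix h assume "h \<in> dcoset n (Bup n) u'"
    then obtain b1 b2 where h: "h = mmul n (mmul n b1 (permmat n u')) b2" "b1 \<in> Bup n" "b2 \<in> Bup n"
      by (auto simp: dcoset_def)
    let ?psi = "\<lambda>x. mmul n b1 (mmul n x b2)"
    have "?psi ` dcoset n (Bup n) u \<subseteq> dcoset n (Bup n) u"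
    proof
      fix y assume "y \<in> ?psi ` dcoset n (Bup n) u"
      then obtain x where x: "x \<in> dcoset n (Bup n) u" "y = ?psi x" by blast
      have "mmul n x b2 \<in> dcoset n (Bup n) u" by (rule dcoset_right[OF x(1) h(3)])
      then show "y \<in> dcoset n (Bup n) u" unfolding x(2)
        by (rule dcoset_left[OF _ h(2)]) (rule Bup_mult)
    qed
    then have "?psi ` dcoset n (Bup n) u \<subseteq> closure (dcoset n (Bup n) u)" using closure_subset by blast
    then have "?psi ` closure (dcoset n (Bup n) u) \<subseteq> closure (dcoset n (Bup n) u)"
      by (intro image_closure_subset continuous_on_subset[OF cont_mmul2]) auto
    then have "?psi (permmat n u') \<in> closure (dcoset n (Bup n) u)" using assms by blast
    moreover have "?psi (permmat n u') = h" by (simp add: h mmul_assoc)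
    ultimately show "h \<in> closure (dcoset n (Bup n) u)" by simp
  qed
qed

lemma smono_id:
  fixes f :: "nat \<Rightarrow> nat"
  assumes m: "\<And>x y. x < y \<Longrightarrow> y < n \<Longrightarrow> f x < f y" and b: "\<And>x. x < n \<Longrightarrow> f x < n"
  shows "x < n \<Longrightarrow> f x = x"
proof -
  have ge: "x < n \<longrightarrow> x \<le> f x" for x
  proof (induction x)
    case (Suc x)
    then show ?case using m[of x "Suc x"] by auto
  qed simp
  have le: "x < n \<Longrightarrow> f x \<le> x" for x
  proof (induction "n - Suc x" arbitrary: x)
    case 0
    then have "x = n - 1" by simp
    then show ?case using b[OF \<open>x < n\<close>] by simp
  next
    case (Suc d)
    then have "Suc x < n" by simp
    then have "f (Suc x) \<le> Suc x" using Suc.hyps(1)[of "Suc x"] Suc.hyps(2) by simp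
    then show ?case using m[of x "Suc x"] \<open>Suc x < n\<close> by simp
  qed
  show "x < n \<Longrightarrow> f x = x" using ge[of x] le[of x] by simp
qed

definition badp :: "nat \<Rightarrow> (nat \<Rightarrow> nat) \<Rightarrow> (nat \<Rightarrow> nat) \<Rightarrow> (nat \<times> nat) set" where
  "badp n v u = {(p, q). p < q \<and> q < n \<and> v (u q) < v (u p)}"

lemma finite_badp: "finite (badp n v u)"
  by (rule finite_subset[of _ "{..<n} \<times> {..<n}"]) (auto simp: badp_def)

definition sig :: "nat \<Rightarrow> nat \<Rightarrow> nat" where
  "sig i x = (if x = i then Suc i else if x = Suc i then i else x)"

lemma swp_sig: "swp u i = u \<circ> sig i"
  by (auto simp: swp_def sig_def fun_eq_iff)

lemma sig_transpose: "sig i = Transposition.transpose i (Suc i)"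
  by (auto simp: sig_def Transposition.transpose_def fun_eq_iff)

lemma sig_sig[simp]: "sig i (sig i x) = x" by (auto simp: sig_def)

lemma chain:
  assumes v: "v permutes {..<n}" "\<And>x. v (v x) = x"
  shows "u permutes {..<n} \<Longrightarrow> (\<And>p q. p < q \<Longrightarrow> q < n \<Longrightarrow> v (u q) < v (u p) \<Longrightarrow> u q < u p)
     \<Longrightarrow> permmat n v \<in> closure (dcoset n (Bup n) u)"
proof (induction "card (badp n v u)" arbitrary: u rule: less_induct)
  case (less u)
  note u = less.prems(1) and H = less.prems(2)
  have ul: "u k < n" if "k < n" for k using u that permutes_in_image by fastforce
  have vl: "v k < n" if "k < n" for k using v(1) that permutes_in_image by fastforce
  have uinj: "u a = u b \<longleftrightarrow> a = b" for a b using permutes_inj[OF u] by (auto dest: injD)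
  have vinj: "v a = v b \<longleftrightarrow> a = b" for a b using permutes_inj[OF v(1)] by (auto dest: injD)
  show ?case
  proof (cases "badp n v u = {}")
    case True
    have mono: "v (u x) < v (u y)" if "x < y" "y < n" for x y
    proof -
      have "\<not> v (u y) < v (u x)" using True that by (auto simp: badp_def)
      moreover have "v (u y) \<noteq> v (u x)" using that vinj uinj by simp
      ultimately show ?thesis by simp
    qed
    have "v (u x) = x" if "x < n" for x
      by (rule smono_id[of n "\<lambda>x. v (u x)"]) (use mono ul vl that in auto)
    then have "u x = v x" if "x < n" for x using v(2)[of "u x"] that by metis
    then have "permmat n v = permmat n u" by (auto simp: permmat_def fun_eq_iff)
    then show ?thesis using perm_in_dcoset[of n "Bup n" u] closure_subset by auto
  next
    case False
    obtain pq where pq: "pq \<in> badp n v u" using False by blast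
    obtain p q where pqm: "(p, q) \<in> badp n v u"
      and minim: "\<And>p' q'. (p', q') \<in> badp n v u \<Longrightarrow> q - p \<le> q' - p'"
      using ex_has_least_nat[of "\<lambda>pq. pq \<in> badp n v u" pq "\<lambda>(p,q). q - p"] pq by auto
    have pq1: "p < q" "q < n" "v (u q) < v (u p)" using pqm by (auto simp: badp_def)
    have qp: "q = Suc p"
    proof (rule ccontr)
      assume "q \<noteq> Suc p"
      then have r: "Suc p < q" using pq1 by simp
      show False
      proof (cases "v (u (Suc p)) < v (u p)")
        case True
        then have "(p, Suc p) \<in> badp n v u" using r pq1 by (auto simp: badp_def)
        then show False using minim[of p "Suc p"] r by simp
      next
        case False
        then have "v (u p) < v (u (Suc p))" using vinj uinj by (metis linorder_neqE_nat n_not_Suc_n)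
        then have "(Suc p, q) \<in> badp n v u" using r pq1 by (auto simp: badp_def)
        then show False using minim[of "Suc p" q] r pq1 by simp
      qed
    qed
    define i where "i = p"
    have i: "Suc i < n" "v (u (Suc i)) < v (u i)" using pq1 qp by (auto simp: i_def)
    have desc: "u (Suc i) < u i" using H[of i "Suc i"] i by simp
    define u' where "u' = swp u i"
    have u'_perm: "u' permutes {..<n}"
      unfolding u'_def swp_sig sig_transpose using i
      by (intro permutes_compose[OF _ u] permutes_swap_id) auto
    have u'_app: "u' x = u (sig i x)" for x by (simp add: u'_def swp_sig)
    have sig_mono: "sig i p' < sig i q'" if "p' < q'" "(p', q') \<noteq> (i, Suc i)" for p' q'
      using that by (auto simp: sig_def)
    have sig_lt: "sig i x < n" if "x < n" for x using that i by (auto simp: sig_def)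
    have bad_map: "(sig i p', sig i q') \<in> badp n v u - {(i, Suc i)}" if "(p', q') \<in> badp n v u'" for p' q'
    proof -
      have pq': "p' < q'" "q' < n" "v (u (sig i q')) < v (u (sig i p'))"
        using that by (auto simp: badp_def u'_app)
      have ne: "(p', q') \<noteq> (i, Suc i)"
      proof
        assume "(p', q') = (i, Suc i)"
        then show False using pq'(3) i(2) by (simp add: sig_def)
      qed
      have "sig i p' < sig i q'" using sig_mono pq'(1) ne by blast
      moreover have "(sig i p', sig i q') \<noteq> (i, Suc i)" using ne pq'(1) by (auto simp: sig_def split: if_splits)
      ultimately show ?thesis using pq' sig_lt by (auto simp: badp_def)
    qed
    have H': "u' q' < u' p'" if "p' < q'" "q' < n" "v (u' q') < v (u' p')" for p' q'
    proof -
      have "(p', q') \<in> badp n v u'" using that by (auto simp: badp_def)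
      then have "(sig i p', sig i q') \<in> badp n v u" using bad_map by blast
      then have "u (sig i q') < u (sig i p')" using H by (auto simp: badp_def)
      then show ?thesis by (simp add: u'_app)
    qed
    have "badp n v u' \<subseteq> (\<lambda>(a, b). (sig i a, sig i b)) ` (badp n v u - {(i, Suc i)})"
    proof
      fix x assume x: "x \<in> badp n v u'"
      obtain p' q' where x': "x = (p', q')" by (cases x)
      have "(sig i p', sig i q') \<in> badp n v u - {(i, Suc i)}" using bad_map x x' by blast
      then show "x \<in> (\<lambda>(a, b). (sig i a, sig i b)) ` (badp n v u - {(i, Suc i)})"
        using x' by (auto intro!: image_eqI[of _ _ "(sig i p', sig i q')"])
    qed
    then have "card (badp n v u') \<le> card ((\<lambda>(a, b). (sig i a, sig i b)) ` (badp n v u - {(i, Suc i)}))"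
      by (intro card_mono finite_imageI finite_Diff finite_badp)
    also have "\<dots> \<le> card (badp n v u - {(i, Suc i)})" by (intro card_image_le finite_Diff finite_badp)
    also have "\<dots> < card (badp n v u)"
      by (rule card_Diff1_less[OF finite_badp]) (use i in \<open>auto simp: badp_def\<close>)
    finally have lt: "card (badp n v u') < card (badp n v u)" .
    have "permmat n v \<in> closure (dcoset n (Bup n) u')" by (rule less.hyps[OF lt u'_perm H'])
    moreover have "closure (dcoset n (Bup n) u') \<subseteq> closure (dcoset n (Bup n) u)"
      by (rule dcoset_sub_closure) (unfold u'_def, rule step_closure[OF u i(1) desc])
    ultimately show ?thesis by blast
  qed
qed

lemma perm_in_Schubert: "perm_flag n w \<in> Fl n \<Longrightarrow> perm_flag n w \<in> Schubert n w"
  unfolding Schubert_def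
  using closure_of_subset_Int[of "flag_top n" "flag_of n ` dcoset n (Bup n) w"]
    perm_in_dcoset[of n "Bup n" w] by (auto simp: topspace_flag_top perm_flag_def)

lemma perm_in_dualSchubert: "perm_flag n w \<in> Fl n \<Longrightarrow> perm_flag n w \<in> dualSchubert n w"
  unfolding dualSchubert_def
  using closure_of_subset_Int[of "flag_top n" "flag_of n ` dcoset n (Blow n) w"]
    perm_in_dcoset[of n "Blow n" w] by (auto simp: topspace_flag_top perm_flag_def)

lemma wJ_in_XJ:
  assumes JJ: "J' \<subseteq> J"
  shows "perm_flag n (wJ n J') \<in> Schubert n (wJ n J)"
proof -
  let ?u = "wJ n J" and ?v = "wJ n J'"
  have H: "?u q < ?u p" if pq: "p < q" "q < n" "?v (?u q) < ?v (?u p)" for p q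
  proof (rule ccontr)
    assume "\<not> ?u q < ?u p"
    moreover have "?u q \<noteq> ?u p"
    proof
      assume "?u q = ?u p"
      then have "?u (?u q) = ?u (?u p)" by simp
      then show False using pq(1) by (simp add: wJ_invol)
    qed
    ultimately have xy: "?u p < ?u q" by simp
    have "?u q < n" using pq by (intro wJ_lt) simp
    then have "{?u p<..?u q} \<subseteq> J'" using wJ_desc_iff[OF xy] pq(3) by blast
    then have "{?u p<..?u q} \<subseteq> J" using JJ by blast
    then have "?u (?u q) < ?u (?u p)" using wJ_desc_iff[OF xy \<open>?u q < n\<close>, of J] by simp
    then show False using pq(1) by (simp add: wJ_invol)
  qed
  have Pc: "permmat n ?v \<in> closure (dcoset n (Bup n) ?u)"
    by (rule chain[OF wJ_permutes wJ_invol wJ_permutes H])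
  have DGL: "dcoset n (Bup n) ?u \<subseteq> GL n" by (rule dcoset_GL) (auto simp: Bup_def wJ_GL)
  have "permmat n ?v \<in> (top_of_set (GL n)) closure_of (dcoset n (Bup n) ?u)"
    using Pc wJ_GL[of n J'] DGL by (simp add: closure_of_subtopology Int_absorb1)
  then have "flag_of n (permmat n ?v) \<in> flag_of n ` ((top_of_set (GL n)) closure_of (dcoset n (Bup n) ?u))"
    by blast
  also have "\<dots> \<subseteq> flag_top n closure_of (flag_of n ` dcoset n (Bup n) ?u)"
    by (rule continuous_map_image_closure_subset[OF cont_flag])
  finally show ?thesis by (simp add: Schubert_def perm_flag_def)
qed

theorem proposition3p2:
  fixes n :: nat and J J' :: "nat set"
  assumes "2 \<le> n" and "J \<subseteq> {1..n-1}" and "J' \<subseteq> {1..n-1}"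
  shows "(XJ n J \<inter> OmegaJ n J' \<noteq> {} \<longleftrightarrow> J' \<subseteq> J)
         \<and> XJ n J \<inter> OmegaJ n J = {perm_flag n (wJ n J)}"
proof (intro conjI iffI)
  assume "XJ n J \<inter> OmegaJ n J' \<noteq> {}"
  then obtain F where F: "F \<in> XJ n J" "F \<in> OmegaJ n J'" by blast
  have "F \<in> CX n J" using F(1) Schubert_sub_CX by (auto simp: XJ_def)
  moreover have "F \<in> CO n (wJ n J')" using F(2) dualSchubert_sub_CO by (auto simp: OmegaJ_def)
  ultimately show "J' \<subseteq> J" using CX_CO_sub assms(3) by blast
next
  assume JJ: "J' \<subseteq> J"
  have "perm_flag n (wJ n J') \<in> XJ n J"
    using wJ_in_XJ[OF JJ] perm_flag_Pet by (auto simp: XJ_def)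
  moreover have "perm_flag n (wJ n J') \<in> OmegaJ n J'"
    using perm_in_dualSchubert[OF perm_flag_Fl] perm_flag_Pet by (auto simp: OmegaJ_def)
  ultimately show "XJ n J \<inter> OmegaJ n J' \<noteq> {}" by blast
next
  show "XJ n J \<inter> OmegaJ n J = {perm_flag n (wJ n J)}"
  proof
    show "XJ n J \<inter> OmegaJ n J \<subseteq> {perm_flag n (wJ n J)}"
    proof
      fix F assume F: "F \<in> XJ n J \<inter> OmegaJ n J"
      have "F \<in> CX n J" using F Schubert_sub_CX by (auto simp: XJ_def)
      moreover have "F \<in> CO n (wJ n J)" using F dualSchubert_sub_CO by (auto simp: OmegaJ_def)
      moreover have "F \<in> Pet n" using F by (auto simp: XJ_def)
      ultimately show "F \<in> {perm_flag n (wJ n J)}" using unique_flag by blast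
    qed
    show "{perm_flag n (wJ n J)} \<subseteq> XJ n J \<inter> OmegaJ n J"
      using perm_in_Schubert[OF perm_flag_Fl] perm_in_dualSchubert[OF perm_flag_Fl] perm_flag_Pet
      by (auto simp: XJ_def OmegaJ_def)
  qed
qed

end
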